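(* Let $\mathcal{H}_0$ and $\mathfrak{N}$ be Hilbert spaces with $\dim\mathfrak{N}=\kappa<\infty$. Let $A_0$ be a self-adjoint operator in $\mathcal{H}_0$, $B$ a bounded operator from $\mathcal{H}_0$ into $\mathfrak{N}$, and $D$ a self-adjoint operator in $\mathfrak{N}$. Then the operator-valued function $V(z)=-\left(D+B(A_0-zI)^{-1}B^*-zI\right)^{-1}$, $z\in\mathbb{C}_+\cup\mathbb{C}_-$, belongs to the class $N^1_\kappa(R)$ in the Hilbert space $\mathfrak{N}$.
   Context: Class $N_\kappa$ (values in $[E,E]$, here $E=\mathfrak{N}$): $V$ meromorphic on $\mathbb{C}\setminus\mathbb{R}$ with domain of holomorphy $Z_V$, $V(\bar z)=V(z)^*$, such that the kernel $N_V(z,\zeta)=\frac{V(\zeta)-V(z)^*}{\zeta-\bar z}$ ($N_V(z,\bar z)=V'(z)$) has exactly $\kappa$ negative squares, i.e. all forms $\sum_{j,k}(N_V(z_j,z_k)h_j,h_k)\xi_j\bar\xi_k$ ($z_j\in Z_V$, $h_j\in E$) have at most $\kappa$ negative squares and some has exactly $\kappa$. Class $N_\kappa(R)$ ($\dim E<\infty$): $V\in N_\kappa$ with (i) $\lim_{y\uparrow\infty}(V(iy)f,f)/y=0$ $\forall f\in E$; (ii) $\bigcap_{\zeta\in Z_V}\ker N_V(\zeta,z)=\{0\}$ $\forall z\in Z_V$; (iii) $\lim_{y\uparrow\infty}V(iy)f=0$ for all $f\in\mathcal{B}=\{f\in E:\lim_{y\uparrow\infty}y(\mathrm{Im}\,V(iy)f,f)<\infty\}$.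 Subclass $N^1_\kappa(R)$: those $V\in N_\kappa(R)$ with $\mathcal{B}=E$. *)

theory Defs
  imports "HOL-Complex_Analysis.Complex_Analysis"
begin

class chilbert = real_normed_vector + complete_space +
  fixes cscale :: "complex \<Rightarrow> 'a \<Rightarrow> 'a" (infixr \<open>*\<^sub>C\<close> 75)
    and cinner :: "'a \<Rightarrow> 'a \<Rightarrow> complex"
  assumes cscale_add_right: "a *\<^sub>C (x + y) = a *\<^sub>C x + a *\<^sub>C y"
    and cscale_add_left: "(a + b) *\<^sub>C x = a *\<^sub>C x + b *\<^sub>C x"
    and cscale_cscale: "a *\<^sub>C (b *\<^sub>C x) = (a * b) *\<^sub>C x"
    and cscale_of_real: "complex_of_real r *\<^sub>C x = r *\<^sub>R x"
    and cinner_add_left: "cinner (x + y) z = cinner x z + cinner y z"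
    and cinner_cscale_left: "cinner (a *\<^sub>C x) y = a * cinner x y"
    and cinner_commute: "cinner y x = cnj (cinner x y)"
    and cinner_self_norm: "cinner x x = complex_of_real ((norm x)\<^sup>2)"

text \<open>An operator in H is given by its domain DA and its action A on DA.\<close>

definition csubspace :: "'a::chilbert set \<Rightarrow> bool" where
  "csubspace S \<longleftrightarrow> 0 \<in> S \<and> (\<forall>x\<in>S. \<forall>y\<in>S. x + y \<in> S) \<and> (\<forall>a. \<forall>x\<in>S. a *\<^sub>C x \<in> S)"

definition clinear_on :: "'a::chilbert set \<Rightarrow> ('a \<Rightarrow> 'b::chilbert) \<Rightarrow> bool" where
  "clinear_on S A \<longleftrightarrow> (\<forall>x\<in>S. \<forall>y\<in>S. A (x + y) = A x + A y) \<and> (\<forall>a. \<forall>x\<in>S. A (a *\<^sub>C x) = a *\<^sub>C A x)"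

text \<open>Self-adjoint: densely defined, linear, and A equals its adjoint A*
  (same domain, same action).\<close>
definition selfadjoint :: "'a::chilbert set \<Rightarrow> ('a \<Rightarrow> 'a) \<Rightarrow> bool" where
  "selfadjoint DA A \<longleftrightarrow> csubspace DA \<and> clinear_on DA A \<and> closure DA = UNIV
     \<and> (\<forall>y. y \<in> DA \<longleftrightarrow> (\<exists>w. \<forall>x\<in>DA. cinner (A x) y = cinner x w))
     \<and> (\<forall>x\<in>DA. \<forall>y\<in>DA. cinner (A x) y = cinner x (A y))"

definition resolvent :: "'a::chilbert set \<Rightarrow> ('a \<Rightarrow> 'a) \<Rightarrow> complex \<Rightarrow> 'a \<Rightarrow> 'a" where
  "resolvent DA A z y = (THE x. x \<in> DA \<and> A x - z *\<^sub>C x = y)"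

section \<open>The finite-dimensional space N = C^n (n a finite index type, dim = CARD('n))\<close>

definition ninner :: "complex^'n \<Rightarrow> complex^'n \<Rightarrow> complex" where
  "ninner f g = (\<Sum>i\<in>UNIV. f $ i * cnj (g $ i))"

definition cadj :: "complex^'n^'n \<Rightarrow> complex^'n^'n" where
  "cadj M = (\<chi> i j. cnj (M $ j $ i))"

definition bounded_op :: "('a::chilbert \<Rightarrow> complex^'n) \<Rightarrow> bool" where
  "bounded_op B \<longleftrightarrow> (\<forall>x y. B (x + y) = B x + B y) \<and> (\<forall>a x. B (a *\<^sub>C x) = a *s B x)
     \<and> (\<exists>K. \<forall>x. norm (B x) \<le> K * norm x)"

definition is_adjoint :: "('a::chilbert \<Rightarrow> complex^'n) \<Rightarrow> (complex^'n \<Rightarrow> 'a) \<Rightarrow> bool" where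
  "is_adjoint B Bs \<longleftrightarrow> (\<forall>x f. ninner (B x) f = cinner x (Bs f))"

definition entry :: "(complex \<Rightarrow> complex^'n^'n) \<Rightarrow> 'n \<Rightarrow> 'n \<Rightarrow> complex \<Rightarrow> complex" where
  "entry V i j = (\<lambda>w. V w $ i $ j)"

definition holdom :: "(complex \<Rightarrow> complex^'n^'n) \<Rightarrow> complex set" where
  "holdom V = {z. z \<notin> \<real> \<and> (\<forall>i j. entry V i j analytic_on {z})}"

text \<open>The kernel N_V(z, zeta); on the diagonal zeta = conj z its continuous extension V'(zeta).\<close>
definition NV :: "(complex \<Rightarrow> complex^'n^'n) \<Rightarrow> complex \<Rightarrow> complex \<Rightarrow> complex^'n^'n" where
  "NV V z \<zeta> = (if \<zeta> = cnj z then (\<chi> i j. deriv (entry V i j) \<zeta>)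
               else (\<chi> i j. (V \<zeta> $ i $ j - cnj (V z $ j $ i)) / (\<zeta> - cnj z)))"

definition kform :: "(complex \<Rightarrow> complex^'n^'n) \<Rightarrow> nat \<Rightarrow> (nat \<Rightarrow> complex) \<Rightarrow> (nat \<Rightarrow> complex^'n)
    \<Rightarrow> (nat \<Rightarrow> complex) \<Rightarrow> complex" where
  "kform V m zs hs \<xi> = (\<Sum>j<m. \<Sum>k<m. ninner (NV V (zs j) (zs k) *v hs j) (hs k) * \<xi> j * cnj (\<xi> k))"

text \<open>A form Q has at least r negative squares: there is an r-dimensional subspace
  (spanned by u_0..u_{r-1}) on which Q is negative definite.\<close>
definition neg_squares_ge :: "((nat \<Rightarrow> complex) \<Rightarrow> complex) \<Rightarrow> nat \<Rightarrow> bool" where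
  "neg_squares_ge Q r \<longleftrightarrow> (\<exists>u :: nat \<Rightarrow> nat \<Rightarrow> complex. \<forall>c :: nat \<Rightarrow> complex.
      (\<exists>l<r. c l \<noteq> 0) \<longrightarrow> Re (Q (\<lambda>j. \<Sum>l<r. c l * u l j)) < 0)"

definition class_N :: "nat \<Rightarrow> (complex \<Rightarrow> complex^'n^'n) \<Rightarrow> bool" where
  "class_N \<kappa> V \<longleftrightarrow>
     (\<forall>i j. entry V i j meromorphic_on (- \<real>))
   \<and> (\<forall>z\<in>holdom V. cnj z \<in> holdom V \<and> V (cnj z) = cadj (V z))
   \<and> (\<forall>m zs hs. (\<forall>k<m. zs k \<in> holdom V) \<longrightarrow> \<not> neg_squares_ge (kform V m zs hs) (Suc \<kappa>))
   \<and> (\<exists>m zs hs. (\<forall>k<m. zs k \<in> holdom V) \<and> neg_squares_ge (kform V m zs hs) \<kappa>)"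

definition at_iinf :: "(complex \<Rightarrow> complex^'n^'n) \<Rightarrow> real filter" where
  "at_iinf V = inf at_top (principal {y. \<i> * complex_of_real y \<in> holdom V})"

definition Bset :: "(complex \<Rightarrow> complex^'n^'n) \<Rightarrow> (complex^'n) set" where
  "Bset V = {f. \<exists>L::real.
     ((\<lambda>y. y * Im (ninner (V (\<i> * complex_of_real y) *v f) f)) \<longlongrightarrow> L) (at_iinf V)}"

definition class_NR :: "nat \<Rightarrow> (complex \<Rightarrow> complex^'n^'n) \<Rightarrow> bool" where
  "class_NR \<kappa> V \<longleftrightarrow> class_N \<kappa> V
   \<and> (\<forall>f. ((\<lambda>y. ninner (V (\<i> * complex_of_real y) *v f) f / complex_of_real y) \<longlongrightarrow> 0) (at_iinf V))
   \<and> (\<forall>z\<in>holdom V. {h. \<forall>\<zeta>\<in>holdom V. NV V \<zeta> z *v h = 0} = {0})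
   \<and> (\<forall>f\<in>Bset V. ((\<lambda>y. V (\<i> * complex_of_real y) *v f) \<longlongrightarrow> 0) (at_iinf V))"

definition class_N1R :: "nat \<Rightarrow> (complex \<Rightarrow> complex^'n^'n) \<Rightarrow> bool" where
  "class_N1R \<kappa> V \<longleftrightarrow> class_NR \<kappa> V \<and> Bset V = UNIV"

definition transfer_fun :: "'a::chilbert set \<Rightarrow> ('a \<Rightarrow> 'a) \<Rightarrow> ('a \<Rightarrow> complex^'n) \<Rightarrow> (complex^'n \<Rightarrow> 'a)
    \<Rightarrow> complex^'n^'n \<Rightarrow> complex \<Rightarrow> complex^'n^'n" where
  "transfer_fun DA A0 B Bs D z =
     - matrix_inv (D + (\<chi> i j. B (resolvent DA A0 z (Bs (axis j 1))) $ i) - mat z)"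

end

theory Submission
  imports Defs
begin

no_notation fps_nth (infixl \<open>$\<close> 75)

lemma cscale_zero_left [simp]: "(0::complex) *\<^sub>C (x::'a::chilbert) = 0"
  using cscale_of_real[of 0 x] by simp

lemma cscale_one [simp]: "(1::complex) *\<^sub>C (x::'a::chilbert) = x"
  using cscale_of_real[of 1 x] by simp

lemma cscale_zero_right [simp]: "a *\<^sub>C (0::'a::chilbert) = 0"
  using cscale_add_right[of a "0::'a" 0] by simp

lemma cscale_minus_left: "(- a) *\<^sub>C (x::'a::chilbert) = - (a *\<^sub>C x)"
proof -
  have "a *\<^sub>C x + (- a) *\<^sub>C x = 0" using cscale_add_left[of a "-a" x, symmetric] by simp
  then show ?thesis by (metis minus_unique)
qed

lemma cscale_minus_right: "a *\<^sub>C (- x::'a::chilbert) = - (a *\<^sub>C x)"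
proof -
  have "a *\<^sub>C x + a *\<^sub>C (- x) = 0" using cscale_add_right[of a x "-x", symmetric] by simp
  then show ?thesis by (metis minus_unique)
qed

lemma cscale_diff_right: "a *\<^sub>C (x - y::'a::chilbert) = a *\<^sub>C x - a *\<^sub>C y"
  using cscale_add_right[of a x "-y"] by (simp add: cscale_minus_right)

lemma cscale_diff_left: "(a - b) *\<^sub>C (x::'a::chilbert) = a *\<^sub>C x - b *\<^sub>C x"
  using cscale_add_left[of a "-b" x] by (simp add: cscale_minus_left)

lemma cinner_zero_left [simp]: "cinner (0::'a::chilbert) y = 0"
  using cinner_add_left[of "0::'a" 0 y] by simp

lemma cinner_zero_right [simp]: "cinner (x::'a::chilbert) 0 = 0"
  using cinner_commute[of x 0] by simp

lemma cinner_add_right: "cinner (x::'a::chilbert) (y + z) = cinner x y + cinner x z"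
  by (metis cinner_add_left cinner_commute complex_cnj_add)

lemma cinner_cscale_right: "cinner (x::'a::chilbert) (a *\<^sub>C y) = cnj a * cinner x y"
  by (metis cinner_cscale_left cinner_commute complex_cnj_mult)

lemma cinner_minus_left: "cinner (- x::'a::chilbert) y = - cinner x y"
proof -
  have "cinner x y + cinner (- x) y = 0" using cinner_add_left[of x "-x" y, symmetric] by simp
  then show ?thesis by (metis minus_unique)
qed

lemma cinner_minus_right: "cinner (x::'a::chilbert) (- y) = - cinner x y"
proof -
  have "cinner x y + cinner x (- y) = 0" using cinner_add_right[of x y "-y", symmetric] by simp
  then show ?thesis by (metis minus_unique)
qed

lemma cinner_diff_left: "cinner (x - y::'a::chilbert) z = cinner x z - cinner y z"
  using cinner_add_left[of x "-y" z] by (simp add: cinner_minus_left)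

lemma cinner_diff_right: "cinner (x::'a::chilbert) (y - z) = cinner x y - cinner x z"
  using cinner_add_right[of x y "-z"] by (simp add: cinner_minus_right)

lemma cinner_sum_left: "cinner (\<Sum>i\<in>S. f i::'a::chilbert) y = (\<Sum>i\<in>S. cinner (f i) y)"
  by (induction S rule: infinite_finite_induct) (auto simp: cinner_add_left)

lemma cinner_sum_right: "cinner (y::'a::chilbert) (\<Sum>i\<in>S. f i) = (\<Sum>i\<in>S. cinner y (f i))"
  by (induction S rule: infinite_finite_induct) (auto simp: cinner_add_right)

lemma cscale_sum_right: "a *\<^sub>C (\<Sum>i\<in>S. f i::'a::chilbert) = (\<Sum>i\<in>S. a *\<^sub>C f i)"
  by (induction S rule: infinite_finite_induct) (auto simp: cscale_add_right)

lemma cinner_self_Im [simp]: "Im (cinner (x::'a::chilbert) x) = 0"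
  by (simp add: cinner_self_norm)

lemma cinner_self_Re [simp]: "Re (cinner (x::'a::chilbert) x) = (norm x)\<^sup>2"
  by (simp add: cinner_self_norm)

lemma cinner_self_eq_zero [simp]: "cinner (x::'a::chilbert) x = 0 \<longleftrightarrow> x = 0"
  by (simp add: cinner_self_norm)

lemma cinner_self_norm': "cinner (x::'a::chilbert) x = (complex_of_real (norm x))\<^sup>2"
  by (simp add: cinner_self_norm)

lemma norm_cscale: "norm (a *\<^sub>C (x::'a::chilbert)) = cmod a * norm x"
proof -
  have "(norm (a *\<^sub>C x))\<^sup>2 = Re (cinner (a *\<^sub>C x) (a *\<^sub>C x))" by simp
  also have "\<dots> = Re ((a * cnj a) * cinner x x)"
    by (simp add: cinner_cscale_left cinner_cscale_right mult.assoc)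
  also have "a * cnj a = complex_of_real ((cmod a)\<^sup>2)"
    by (simp add: complex_mult_cnj cmod_power2)
  also have "Re (complex_of_real ((cmod a)\<^sup>2) * cinner x x) = (cmod a * norm x)\<^sup>2"
    by (simp add: cinner_self_norm power_mult_distrib del: of_real_power)
  finally show ?thesis by (simp add: power2_eq_iff_nonneg)
qed

lemma proj_alg:
  fixes v c n :: complex
  assumes "n \<noteq> 0" "cnj n = n"
  shows "v - cnj (c/n) * c - (c/n) * cnj c + (c/n) * cnj (c/n) * n = v - c * cnj c / n"
proof -
  have "cnj (c/n) = cnj c / n" using assms by simp
  then show ?thesis using assms by (simp add: field_simps power2_eq_square)
qed

lemma proj_identity:
  fixes v t :: "'a::chilbert"
  assumes "t \<noteq> 0"
  shows "(norm (v - (cinner v t / complex_of_real ((norm t)\<^sup>2)) *\<^sub>C t))\<^sup>2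
         = (norm v)\<^sup>2 - (cmod (cinner v t))\<^sup>2 / (norm t)\<^sup>2"
proof -
  define c where "c = cinner v t"
  define n where "n = complex_of_real ((norm t)\<^sup>2)"
  have n0: "n \<noteq> 0" using assms by (simp add: n_def)
  have cn: "cnj n = n" by (simp add: n_def)
  have ctv: "cinner t v = cnj c" by (simp add: c_def cinner_commute[of t v])
  have tt: "cinner t t = n" by (simp add: n_def cinner_self_norm)
  have "complex_of_real ((norm (v - (c / n) *\<^sub>C t))\<^sup>2)
      = cinner v v - cnj (c/n) * c - (c/n) * cnj c + (c/n) * cnj (c/n) * n"
    by (simp add: cinner_self_norm'[symmetric] cinner_diff_left cinner_diff_right
        cinner_cscale_left cinner_cscale_right ctv c_def[symmetric] tt algebra_simps)
  also have "\<dots> = cinner v v - c * cnj c / n"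
    using proj_alg[OF n0 cn] by simp
  also have "c * cnj c = complex_of_real ((cmod c)\<^sup>2)" by (simp add: complex_mult_cnj cmod_power2)
  finally have "complex_of_real ((norm (v - (c / n) *\<^sub>C t))\<^sup>2)
      = complex_of_real ((norm v)\<^sup>2 - (cmod c)\<^sup>2 / (norm t)\<^sup>2)"
    by (simp add: cinner_self_norm n_def)
  then show ?thesis unfolding c_def n_def using of_real_eq_iff by blast
qed

lemma cinner_cauchy_schwarz: "cmod (cinner (x::'a::chilbert) y) \<le> norm x * norm y"
proof (cases "y = 0")
  case True then show ?thesis by simp
next
  case False
  then have ny: "norm y > 0" by simp
  have "0 \<le> (norm x)\<^sup>2 - (cmod (cinner x y))\<^sup>2 / (norm y)\<^sup>2"
    using proj_identity[OF False, of x] by (metis zero_le_power2)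
  then have "(cmod (cinner x y))\<^sup>2 \<le> (norm x * norm y)\<^sup>2"
    using ny by (simp add: field_simps power_mult_distrib)
  then show ?thesis using power2_le_imp_le by fastforce
qed

lemma norm_add_sq: "(norm (x + y::'a::chilbert))\<^sup>2 = (norm x)\<^sup>2 + (norm y)\<^sup>2 + 2 * Re (cinner x y)"
proof -
  have "complex_of_real ((norm (x + y))\<^sup>2) = cinner x x + cinner y y + cinner x y + cinner y x"
    by (simp add: cinner_self_norm'[symmetric] cinner_add_left cinner_add_right)
  then have "(norm (x + y))\<^sup>2 = Re (cinner x x + cinner y y + cinner x y + cinner y x)"
    by (metis Re_complex_of_real)
  then show ?thesis by (simp add: cinner_commute[of y x])
qed

lemma norm_diff_sq: "(norm (x - y::'a::chilbert))\<^sup>2 = (norm x)\<^sup>2 + (norm y)\<^sup>2 - 2 * Re (cinner x y)"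
  using norm_add_sq[of x "-y"] by (simp add: cinner_minus_right)

lemma parallelogram:
  "(norm (x + y::'a::chilbert))\<^sup>2 + (norm (x - y))\<^sup>2 = 2 * (norm x)\<^sup>2 + 2 * (norm y)\<^sup>2"
  by (simp add: norm_add_sq norm_diff_sq)

lemma cinner_eq_zero_all: "(\<And>u. cinner u (p::'a::chilbert) = 0) \<Longrightarrow> p = 0"
  using cinner_self_eq_zero by blast

lemma cinner_dense_zero:
  fixes p :: "'a::chilbert"
  assumes "closure S = UNIV" and "\<And>u. u \<in> S \<Longrightarrow> cinner u p = 0"
  shows "p = 0"
proof (rule ccontr)
  assume p0: "p \<noteq> 0"
  then have np: "norm p > 0" by simp
  have "p \<in> closure S" using assms(1) by simp
  then obtain u where u: "u \<in> S" "dist u p < norm p / 2"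
    using np by (metis closure_approachable half_gt_zero)
  have "cinner p p = cinner (p - u) p" using assms(2)[OF u(1)] by (simp add: cinner_diff_left)
  then have "cmod (cinner p p) \<le> norm (p - u) * norm p"
    using cinner_cauchy_schwarz[of "p - u" p] by simp
  then have "(norm p)\<^sup>2 \<le> norm (p - u) * norm p"
    by (simp add: cinner_self_norm norm_power)
  moreover have "norm (p - u) < norm p / 2" using u(2) by (simp add: dist_norm norm_minus_commute)
  ultimately have "(norm p)\<^sup>2 < norm p / 2 * norm p"
    using np by (smt (verit) mult_strict_right_mono)
  then show False using np by (simp add: power2_eq_square)
qed


lemma bounded_bilinear_cinner: "bounded_bilinear (cinner :: 'a::chilbert \<Rightarrow> 'a \<Rightarrow> complex)"
proof
  fix a a' b b' :: 'a and r :: real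
  show "cinner (a + a') b = cinner a b + cinner a' b" by (rule cinner_add_left)
  show "cinner a (b + b') = cinner a b + cinner a b'" by (rule cinner_add_right)
  show "cinner (r *\<^sub>R a) b = r *\<^sub>R cinner a b"
    using cinner_cscale_left[of "complex_of_real r" a b] by (simp add: cscale_of_real scaleR_conv_of_real)
  show "cinner a (r *\<^sub>R b) = r *\<^sub>R cinner a b"
    using cinner_cscale_right[of a "complex_of_real r" b] by (simp add: cscale_of_real scaleR_conv_of_real)
next
  show "\<exists>K. \<forall>a b::'a. norm (cinner a b) \<le> norm a * norm b * K"
    by (rule exI[of _ 1]) (simp add: cinner_cauchy_schwarz)
qed

lemmas tendsto_cinner [tendsto_intros] = bounded_bilinear.tendsto[OF bounded_bilinear_cinner]

lemma cscale_half: "(1/2::complex) *\<^sub>C x + (1/2::complex) *\<^sub>C x = (x::'a::chilbert)"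
  using cscale_add_left[of "1/2" "1/2" x] by simp


locale sa =
  fixes DA :: "'a::chilbert set" and A :: "'a \<Rightarrow> 'a"
  assumes sa: "selfadjoint DA A"
begin

lemma sa_parts: "csubspace DA \<and> clinear_on DA A \<and> closure DA = UNIV
     \<and> (\<forall>y. y \<in> DA \<longleftrightarrow> (\<exists>w. \<forall>x\<in>DA. cinner (A x) y = cinner x w))
     \<and> (\<forall>x\<in>DA. \<forall>y\<in>DA. cinner (A x) y = cinner x (A y))"
  using sa unfolding selfadjoint_def .

lemmas sub = sa_parts[THEN conjunct1]
lemmas lin = sa_parts[THEN conjunct2, THEN conjunct1]
lemmas dense = sa_parts[THEN conjunct2, THEN conjunct2, THEN conjunct1]
lemmas adjdom = sa_parts[THEN conjunct2, THEN conjunct2, THEN conjunct2, THEN conjunct1, rule_format]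
lemmas symm = sa_parts[THEN conjunct2, THEN conjunct2, THEN conjunct2, THEN conjunct2, rule_format]

lemma DA_0: "0 \<in> DA" and DA_add: "x \<in> DA \<Longrightarrow> y \<in> DA \<Longrightarrow> x + y \<in> DA"
  and DA_cscale: "x \<in> DA \<Longrightarrow> a *\<^sub>C x \<in> DA"
  using sub unfolding csubspace_def by blast+

lemma DA_minus: "x \<in> DA \<Longrightarrow> - x \<in> DA"
  using DA_cscale[of x "-1"] by (simp add: cscale_minus_left)

lemma DA_diff: "x \<in> DA \<Longrightarrow> y \<in> DA \<Longrightarrow> x - y \<in> DA"
  using DA_add DA_minus by (metis diff_conv_add_uminus)

lemma A_add: "x \<in> DA \<Longrightarrow> y \<in> DA \<Longrightarrow> A (x + y) = A x + A y"
  using lin unfolding clinear_on_def by simp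

lemma A_cscale: "x \<in> DA \<Longrightarrow> A (a *\<^sub>C x) = a *\<^sub>C A x"
  using lin unfolding clinear_on_def by simp

lemma A_minus: "x \<in> DA \<Longrightarrow> A (- x) = - A x"
  using A_cscale[of x "-1"] by (simp add: cscale_minus_left)

lemma A_diff: "x \<in> DA \<Longrightarrow> y \<in> DA \<Longrightarrow> A (x - y) = A x - A y"
  using A_add[of x "- y"] DA_minus[of y] by (simp add: A_minus)

lemma A_real: "x \<in> DA \<Longrightarrow> Im (cinner (A x) x) = 0"
proof -
  assume x: "x \<in> DA"
  have e: "cinner (A x) x = cnj (cinner (A x) x)"
    using symm[OF x x] cinner_commute[of x "A x"] by simp
  have "Im (cinner (A x) x) = Im (cnj (cinner (A x) x))"
    by (simp only: e[symmetric])
  then show ?thesis by simp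
qed

lemma lower_bound:
  assumes x: "x \<in> DA"
  shows "\<bar>Im z\<bar> * norm x \<le> norm (A x - z *\<^sub>C x)"
proof -
  have "cinner (A x - z *\<^sub>C x) x = cinner (A x) x - z * complex_of_real ((norm x)\<^sup>2)"
    by (simp add: cinner_diff_left cinner_cscale_left cinner_self_norm)
  then have "Im (cinner (A x - z *\<^sub>C x) x) = - Im z * (norm x)\<^sup>2"
    using A_real[OF x] by simp
  then have "\<bar>Im z\<bar> * (norm x)\<^sup>2 \<le> cmod (cinner (A x - z *\<^sub>C x) x)"
    by (metis abs_Im_le_cmod abs_minus_cancel abs_mult abs_power2 mult_minus_left abs_abs)
  also have "\<dots> \<le> norm (A x - z *\<^sub>C x) * norm x" by (rule cinner_cauchy_schwarz)
  finally have *: "\<bar>Im z\<bar> * (norm x)\<^sup>2 \<le> norm (A x - z *\<^sub>C x) * norm x" .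
  show ?thesis
  proof (cases "x = 0")
    case True then show ?thesis by simp
  next
    case False
    then have "norm x > 0" by simp
    then show ?thesis using * by (simp add: power2_eq_square mult.assoc[symmetric])
  qed
qed

lemma T_diff: "x \<in> DA \<Longrightarrow> y \<in> DA \<Longrightarrow>
   A (x - y) - z *\<^sub>C (x - y) = (A x - z *\<^sub>C x) - (A y - z *\<^sub>C y)"
  by (simp add: A_diff cscale_diff_right)

lemma uniq:
  assumes "Im z \<noteq> 0" "x1 \<in> DA" "x2 \<in> DA" "A x1 - z *\<^sub>C x1 = A x2 - z *\<^sub>C x2"
  shows "x1 = x2"
proof -
  have "\<bar>Im z\<bar> * norm (x1 - x2) \<le> 0"
    using lower_bound[OF DA_diff[OF assms(2,3)], of z] T_diff[OF assms(2,3), of z] assms(4) by simp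
  then show ?thesis using assms(1) by (simp add: mult_le_0_iff)
qed

end


lemma bounded_linear_cscale: "bounded_linear (\<lambda>x::'a::chilbert. z *\<^sub>C x)"
proof
  fix x y :: 'a and r :: real
  show "z *\<^sub>C (x + y) = z *\<^sub>C x + z *\<^sub>C y" by (rule cscale_add_right)
  show "z *\<^sub>C (r *\<^sub>R x) = r *\<^sub>R (z *\<^sub>C x)"
    by (simp add: cscale_of_real[symmetric] cscale_cscale mult.commute)
next
  show "\<exists>K. \<forall>x::'a. norm (z *\<^sub>C x) \<le> norm x * K"
    by (rule exI[of _ "cmod z"]) (simp add: norm_cscale mult.commute)
qed

lemmas tendsto_cscale [tendsto_intros] = bounded_linear.tendsto[OF bounded_linear_cscale]

context sa
begin

lemma exists_sol:
  assumes z: "Im z \<noteq> 0"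
  shows "\<exists>x\<in>DA. A x - z *\<^sub>C x = y"
proof -
  define T where "T x = A x - z *\<^sub>C x" for x
  have T_add: "T (x + u) = T x + T u" if "x \<in> DA" "u \<in> DA" for x u
    using that by (simp add: T_def A_add cscale_add_right)
  have T_cscale: "T (a *\<^sub>C x) = a *\<^sub>C T x" if "x \<in> DA" for a x
    using that by (simp add: T_def A_cscale cscale_diff_right cscale_cscale mult.commute)
  have T_diff': "T (x - u) = T x - T u" if "x \<in> DA" "u \<in> DA" for x u
    using that T_diff by (simp add: T_def)
  define D where "D = (\<lambda>x. norm (y - T x)) ` DA"
  define d where "d = Inf D"
  have D_ne: "D \<noteq> {}" using DA_0 by (auto simp: D_def)
  have D_bdd: "bdd_below D" unfolding D_def by (rule bdd_belowI[of _ 0]) auto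
  have d_le: "d \<le> norm (y - T x)" if "x \<in> DA" for x
    unfolding d_def using D_bdd that by (auto simp: D_def intro!: cInf_lower)
  have d_ge0: "0 \<le> d" unfolding d_def using D_ne by (auto simp: D_def intro!: cInf_greatest)
  define e :: "nat \<Rightarrow> real" where "e n = 1 / real (Suc n)" for n
  have e_pos: "0 < e n" for n by (simp add: e_def)
  have e_le1: "e n \<le> 1" for n by (simp add: e_def)
  have "\<exists>x\<in>DA. norm (y - T x) < d + e n" for n
  proof -
    have "Inf D < d + e n" using e_pos[of n] by (simp add: d_def)
    then obtain t where "t \<in> D" "t < d + e n" using cInf_lessD[OF D_ne] by blast
    then show ?thesis by (auto simp: D_def)
  qed
  then obtain X where X: "\<And>n. X n \<in> DA" "\<And>n. norm (y - T (X n)) < d + e n" by metis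
  have key: "(norm (T (X n) - T (X m)))\<^sup>2 \<le> 2 * (d + e n)\<^sup>2 + 2 * (d + e m)\<^sup>2 - 4 * d\<^sup>2" for n m
  proof -
    define a where "a = y - T (X n)"
    define b where "b = y - T (X m)"
    define mid where "mid = (1/2::complex) *\<^sub>C (X n + X m)"
    have mid: "mid \<in> DA" unfolding mid_def using X(1) by (intro DA_cscale DA_add)
    have Tmid: "T mid + T mid = T (X n) + T (X m)"
      unfolding mid_def using X(1) by (simp add: T_cscale DA_add T_add cscale_half)
    have ab: "a + b = (y - T mid) + (y - T mid)"
      unfolding a_def b_def using Tmid by (simp add: algebra_simps)
    have "norm (a + b) = 2 * norm (y - T mid)"
      unfolding ab scaleR_2[symmetric] by simp
    then have nab: "2 * d \<le> norm (a + b)" using d_le[OF mid] by simp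
    have "(norm (a + b))\<^sup>2 + (norm (a - b))\<^sup>2 = 2 * (norm a)\<^sup>2 + 2 * (norm b)\<^sup>2"
      by (rule parallelogram)
    moreover have "(2 * d)\<^sup>2 \<le> (norm (a + b))\<^sup>2"
      using nab d_ge0 by (intro power_mono) auto
    moreover have "(norm a)\<^sup>2 \<le> (d + e n)\<^sup>2"
      using X(2)[of n] unfolding a_def by (intro power_mono) auto
    moreover have "(norm b)\<^sup>2 \<le> (d + e m)\<^sup>2"
      using X(2)[of m] unfolding b_def by (intro power_mono) auto
    moreover have "a - b = T (X m) - T (X n)" unfolding a_def b_def by simp
    ultimately have "(norm (T (X m) - T (X n)))\<^sup>2 \<le> 2 * (d + e n)\<^sup>2 + 2 * (d + e m)\<^sup>2 - 4 * d\<^sup>2"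
      by (simp add: power_mult_distrib)
    then show ?thesis by (simp add: norm_minus_commute)
  qed
  have small: "\<exists>N. \<forall>n\<ge>N. \<forall>m\<ge>N. norm (T (X n) - T (X m)) < \<epsilon>" if "\<epsilon> > 0" for \<epsilon>
  proof -
    obtain N where N: "N \<noteq> 0" "inverse (real N) < \<epsilon>\<^sup>2 / (8 * d + 4)"
      using real_arch_inverse[of "\<epsilon>\<^sup>2 / (8 * d + 4)"] \<open>\<epsilon> > 0\<close> d_ge0 by auto
    show ?thesis
    proof (intro exI allI impI)
      fix n m assume nm: "N \<le> n" "N \<le> m"
      have en: "e n \<le> inverse (real N)" using nm N(1) by (simp add: e_def field_simps)
      have em: "e m \<le> inverse (real N)" using nm N(1) by (simp add: e_def field_simps)
      have "2 * (d + e n)\<^sup>2 + 2 * (d + e m)\<^sup>2 - 4 * d\<^sup>2 = 4 * d * (e n + e m) + 2 * (e n)\<^sup>2 + 2 * (e m)\<^sup>2"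
        by (simp add: power2_eq_square algebra_simps)
      also have "\<dots> \<le> 4 * d * (e n + e m) + 2 * e n + 2 * e m"
      proof -
        have "(e n)\<^sup>2 \<le> e n" "(e m)\<^sup>2 \<le> e m"
          using e_pos[of n] e_pos[of m] e_le1[of n] e_le1[of m]
          by (simp_all add: power2_eq_square mult_left_le)
        then show ?thesis by linarith
      qed
      also have "\<dots> \<le> (8 * d + 4) * inverse (real N)"
      proof -
        have "4 * d * (e n + e m) \<le> 4 * d * (2 * inverse (real N))"
          using en em d_ge0 by (intro mult_left_mono) auto
        then show ?thesis using en em by (simp add: algebra_simps)
      qed
      also have "\<dots> < \<epsilon>\<^sup>2"
        using N(2) d_ge0 by (simp add: field_simps)
      finally have "(norm (T (X n) - T (X m)))\<^sup>2 < \<epsilon>\<^sup>2" using key[of n m] by linarith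
      then show "norm (T (X n) - T (X m)) < \<epsilon>"
        using \<open>\<epsilon> > 0\<close> power2_less_imp_less by fastforce
    qed
  qed
  have CT: "Cauchy (\<lambda>n. T (X n))"
    unfolding Cauchy_def dist_norm using small by blast
  have CX: "Cauchy X"
    unfolding Cauchy_def dist_norm
  proof (intro allI impI)
    fix \<epsilon> :: real assume "\<epsilon> > 0"
    then have "\<epsilon> * \<bar>Im z\<bar> > 0" using z by simp
    then obtain N where N: "\<forall>n\<ge>N. \<forall>m\<ge>N. norm (T (X n) - T (X m)) < \<epsilon> * \<bar>Im z\<bar>"
      using small by blast
    show "\<exists>M. \<forall>m\<ge>M. \<forall>n\<ge>M. norm (X m - X n) < \<epsilon>"
    proof (intro exI allI impI)
      fix m n assume "N \<le> m" "N \<le> n"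
      then have "norm (T (X m) - T (X n)) < \<epsilon> * \<bar>Im z\<bar>" using N by blast
      moreover have "\<bar>Im z\<bar> * norm (X m - X n) \<le> norm (T (X m) - T (X n))"
        using lower_bound[OF DA_diff[OF X(1) X(1)], of z] T_diff'[OF X(1) X(1)]
        by (simp add: T_def)
      ultimately have "\<bar>Im z\<bar> * norm (X m - X n) < \<bar>Im z\<bar> * \<epsilon>" by (simp add: mult.commute)
      then show "norm (X m - X n) < \<epsilon>" using z by simp
    qed
  qed
  obtain x where x: "X \<longlonglongrightarrow> x" using CX Cauchy_convergent_iff convergent_def by blast
  obtain s where s: "(\<lambda>n. T (X n)) \<longlonglongrightarrow> s" using CT Cauchy_convergent_iff convergent_def by blast
  have e0: "e \<longlonglongrightarrow> 0" unfolding e_def using LIMSEQ_Suc[OF lim_inverse_n'] by simp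
  have nd: "norm (y - s) = d"
  proof -
    have l1: "(\<lambda>n. norm (y - T (X n))) \<longlonglongrightarrow> norm (y - s)" by (intro tendsto_intros s)
    have l2: "(\<lambda>n. d + e n) \<longlonglongrightarrow> d" using tendsto_add[OF tendsto_const e0] by simp
    have "norm (y - s) \<le> d"
      using l1 l2 X(2) by (intro LIMSEQ_le[OF l1 l2]) (auto intro: less_imp_le)
    moreover have "d \<le> norm (y - s)"
      using l1 d_le X(1) by (intro LIMSEQ_le_const[OF l1]) auto
    ultimately show ?thesis by simp
  qed
  define v where "v = y - s"
  have orth: "cinner v (T u) = 0" if u: "u \<in> DA" for u
  proof (cases "T u = 0")
    case True then show ?thesis by simp
  next
    case False
    define lam where "lam = cinner v (T u) / complex_of_real ((norm (T u))\<^sup>2)"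
    have "(\<lambda>n. norm (y - T (X n + lam *\<^sub>C u))) \<longlonglongrightarrow> norm (v - lam *\<^sub>C T u)"
    proof -
      have l: "(\<lambda>n. norm (y - T (X n) - lam *\<^sub>C T u)) \<longlonglongrightarrow> norm (y - s - lam *\<^sub>C T u)"
        by (intro tendsto_intros s)
      have eq: "y - T (X n + lam *\<^sub>C u) = y - T (X n) - lam *\<^sub>C T u" for n
        using X(1) u by (simp add: T_add DA_cscale T_cscale)
      show ?thesis unfolding eq v_def by (rule l)
    qed
    then have "d \<le> norm (v - lam *\<^sub>C T u)"
      by (rule LIMSEQ_le_const) (use X(1) u in \<open>auto intro!: d_le DA_add DA_cscale\<close>)
    then have "(norm v)\<^sup>2 \<le> (norm (v - lam *\<^sub>C T u))\<^sup>2"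
      using nd d_ge0 by (simp add: v_def power_mono)
    also have "\<dots> = (norm v)\<^sup>2 - (cmod (cinner v (T u)))\<^sup>2 / (norm (T u))\<^sup>2"
      unfolding lam_def by (rule proj_identity[OF False])
    finally have "(cmod (cinner v (T u)))\<^sup>2 / (norm (T u))\<^sup>2 \<le> 0" by simp
    then have "(cmod (cinner v (T u)))\<^sup>2 \<le> 0" using False
      by (simp add: divide_le_0_iff)
    then show ?thesis by simp
  qed
  have vDA: "v \<in> DA"
  proof -
    have "cinner (A u) v = cinner u (cnj z *\<^sub>C v)" if u: "u \<in> DA" for u
    proof -
      have "cinner (T u) v = 0" using orth[OF u] cinner_commute[of "T u" v] by simp
      then show ?thesis by (simp add: T_def cinner_diff_left cinner_cscale_left cinner_cscale_right)
    qed
    then show ?thesis using adjdom by blast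
  qed
  have "v = 0"
  proof -
    have "cinner (T v) v = 0" using orth[OF vDA] cinner_commute[of "T v" v] by simp
    then have "cinner (A v) v = z * cinner v v" by (simp add: T_def cinner_diff_left cinner_cscale_left)
    then have "Im (z * cinner v v) = 0" using A_real[OF vDA] by simp
    then have "Im z * (norm v)\<^sup>2 = 0" by (simp add: cinner_self_norm)
    then show ?thesis using z by simp
  qed
  then have sy: "s = y" by (simp add: v_def)
  have AX: "(\<lambda>n. A (X n)) \<longlonglongrightarrow> y + z *\<^sub>C x"
  proof -
    have "(\<lambda>n. T (X n) + z *\<^sub>C X n) \<longlonglongrightarrow> y + z *\<^sub>C x"
      using s sy by (intro tendsto_intros x) auto
    then show ?thesis by (simp add: T_def)
  qed
  have cx: "cinner (A u) x = cinner u (y + z *\<^sub>C x)" if u: "u \<in> DA" for u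
  proof -
    have "(\<lambda>n. cinner (A u) (X n)) \<longlonglongrightarrow> cinner (A u) x" by (intro tendsto_intros x)
    moreover have "(\<lambda>n. cinner u (A (X n))) \<longlonglongrightarrow> cinner u (y + z *\<^sub>C x)" by (intro tendsto_intros AX)
    moreover have "cinner (A u) (X n) = cinner u (A (X n))" for n using symm[OF u X(1)] by simp
    ultimately show ?thesis using LIMSEQ_unique by fastforce
  qed
  have xDA: "x \<in> DA" using cx adjdom by blast
  have "A x - (y + z *\<^sub>C x) = 0"
  proof (rule cinner_dense_zero[OF dense])
    fix u assume u: "u \<in> DA"
    show "cinner u (A x - (y + z *\<^sub>C x)) = 0"
      using cx[OF u] symm[OF u xDA] by (simp add: cinner_diff_right)
  qed
  then have "A x - z *\<^sub>C x = y" by (simp add: algebra_simps)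
  then show ?thesis using xDA by blast
qed

end


context sa
begin

abbreviation R where "R z \<equiv> resolvent DA A z"

lemma ex1_sol: "Im z \<noteq> 0 \<Longrightarrow> \<exists>!x. x \<in> DA \<and> A x - z *\<^sub>C x = y"
  using exists_sol uniq by blast

lemma res_spec: "Im z \<noteq> 0 \<Longrightarrow> R z y \<in> DA \<and> A (R z y) - z *\<^sub>C R z y = y"
  unfolding resolvent_def by (rule theI'[OF ex1_sol])

lemma res_DA: "Im z \<noteq> 0 \<Longrightarrow> R z y \<in> DA" using res_spec by blast
lemma res_eq: "Im z \<noteq> 0 \<Longrightarrow> A (R z y) - z *\<^sub>C R z y = y" using res_spec by blast

lemma res_unique: "Im z \<noteq> 0 \<Longrightarrow> x \<in> DA \<Longrightarrow> A x - z *\<^sub>C x = y \<Longrightarrow> R z y = x"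
  using uniq res_spec by blast

lemma res_add: "Im z \<noteq> 0 \<Longrightarrow> R z (y1 + y2) = R z y1 + R z y2"
  apply (rule res_unique, assumption)
   apply (simp add: DA_add res_DA)
  apply (simp add: A_add res_DA cscale_add_right)
  using res_eq[of z y1] res_eq[of z y2] by (simp add: algebra_simps)

lemma res_cscale: "Im z \<noteq> 0 \<Longrightarrow> R z (a *\<^sub>C y) = a *\<^sub>C R z y"
  apply (rule res_unique, assumption)
   apply (simp add: DA_cscale res_DA)
proof -
  assume z: "Im z \<noteq> 0"
  have "a *\<^sub>C y = a *\<^sub>C (A (R z y) - z *\<^sub>C R z y)" using res_eq[OF z] by simp
  also have "\<dots> = a *\<^sub>C A (R z y) - (a * z) *\<^sub>C R z y" by (simp add: cscale_diff_right cscale_cscale)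
  finally show "A (a *\<^sub>C R z y) - z *\<^sub>C a *\<^sub>C R z y = a *\<^sub>C y"
    using z by (simp add: A_cscale res_DA cscale_cscale mult.commute)
qed

lemma res_zero: "Im z \<noteq> 0 \<Longrightarrow> R z 0 = 0"
  using res_cscale[of z 0 0] by simp

lemma res_minus: "Im z \<noteq> 0 \<Longrightarrow> R z (- y) = - R z y"
  using res_cscale[of z "-1" y] by (simp add: cscale_minus_left)

lemma res_diff: "Im z \<noteq> 0 \<Longrightarrow> R z (y1 - y2) = R z y1 - R z y2"
  using res_add[of z y1 "- y2"] res_minus[of z y2] by simp

lemma res_sum: "Im z \<noteq> 0 \<Longrightarrow> R z (\<Sum>i\<in>S. f i) = (\<Sum>i\<in>S. R z (f i))"
  by (induction S rule: infinite_finite_induct) (auto simp: res_zero res_add)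

lemma res_bound: "Im z \<noteq> 0 \<Longrightarrow> \<bar>Im z\<bar> * norm (R z y) \<le> norm y"
  using lower_bound[OF res_DA[of z y], of z] res_eq[of z y] by simp

lemma res_bound': "Im z \<noteq> 0 \<Longrightarrow> norm (R z y) \<le> norm y / \<bar>Im z\<bar>"
  using res_bound[of z y] by (simp add: field_simps mult.commute)

lemma res_adj:
  assumes z: "Im z \<noteq> 0"
  shows "cinner (R z u) v = cinner u (R (cnj z) v)"
proof -
  have z': "Im (cnj z) \<noteq> 0" using z by simp
  define x where "x = R z u"
  define w where "w = R (cnj z) v"
  have x: "x \<in> DA" "A x - z *\<^sub>C x = u" using res_spec[OF z] by (auto simp: x_def)
  have w: "w \<in> DA" "A w - cnj z *\<^sub>C w = v" using res_spec[OF z'] by (auto simp: w_def)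
  have "cinner x v = cinner x (A w) - z * cinner x w"
    by (simp add: w(2)[symmetric] cinner_diff_right cinner_cscale_right)
  moreover have "cinner u w = cinner (A x) w - z * cinner x w"
    by (simp add: x(2)[symmetric] cinner_diff_left cinner_cscale_left)
  moreover have "cinner (A x) w = cinner x (A w)" using symm[OF x(1) w(1)] .
  ultimately show ?thesis by (simp add: x_def w_def)
qed

lemma res_ident:
  assumes z: "Im z \<noteq> 0" and w: "Im w \<noteq> 0"
  shows "R z u - R w u = (z - w) *\<^sub>C R z (R w u)"
proof -
  define a where "a = R w u"
  have a: "a \<in> DA" "A a - w *\<^sub>C a = u" using res_spec[OF w] by (auto simp: a_def)
  have "A a - z *\<^sub>C a = u + (w - z) *\<^sub>C a"
    using a(2) by (simp add: cscale_diff_left algebra_simps)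
  then have "R z (u + (w - z) *\<^sub>C a) = a" using res_unique[OF z a(1)] by simp
  then have "R z u + (w - z) *\<^sub>C R z a = a" using res_add[OF z] res_cscale[OF z] by simp
  then have "R z u - a = (z - w) *\<^sub>C R z a"
    by (simp add: cscale_diff_left algebra_simps)
  then show ?thesis by (simp add: a_def)
qed

lemma res_comm:
  assumes z: "Im z \<noteq> 0" and w: "Im w \<noteq> 0"
  shows "R z (R w u) = R w (R z u)"
proof (cases "z = w")
  case True then show ?thesis by simp
next
  case False
  have "R z u - R w u = (z - w) *\<^sub>C R z (R w u)" by (rule res_ident[OF z w])
  moreover have "R w u - R z u = (w - z) *\<^sub>C R w (R z u)" by (rule res_ident[OF w z])
  ultimately have "(z - w) *\<^sub>C R z (R w u) = (z - w) *\<^sub>C R w (R z u)"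
    by (metis cscale_minus_left minus_diff_eq)
  then have "(1 / (z - w)) *\<^sub>C ((z - w) *\<^sub>C R z (R w u)) = (1 / (z - w)) *\<^sub>C ((z - w) *\<^sub>C R w (R z u))"
    by simp
  then show ?thesis using False by (simp add: cscale_cscale)
qed

lemma res_Im:
  assumes z: "Im z \<noteq> 0"
  shows "Im (cinner (R z u) u) = Im z * (norm (R z u))\<^sup>2"
proof -
  define x where "x = R z u"
  have x: "x \<in> DA" "A x - z *\<^sub>C x = u" using res_spec[OF z] by (auto simp: x_def)
  have "cinner x u = cinner (A x) x - cnj z * cinner x x"
    by (simp add: x(2)[symmetric] cinner_diff_right cinner_cscale_right symm[OF x(1) x(1)])
  then have "Im (cinner x u) = Im z * (norm x)\<^sup>2" using A_real[OF x(1)] by (simp add: cinner_self_norm)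
  then show ?thesis by (simp add: x_def)
qed

end


lemma Reals_compl_iff: "z \<in> - \<real> \<longleftrightarrow> Im z \<noteq> 0"
  by (simp add: complex_is_Real_iff)

lemma open_nonreal: "open (- \<real> :: complex set)"
  by (rule open_Compl[OF closed_complex_Reals])

lemma eventually_Im_half:
  assumes "Im w0 \<noteq> 0"
  shows "eventually (\<lambda>w. \<bar>Im w0\<bar> / 2 \<le> \<bar>Im w\<bar>) (at w0)"
proof -
  have d: "\<bar>Im w0\<bar> / 2 > 0" using assms by simp
  have "\<forall>w. dist w w0 < \<bar>Im w0\<bar> / 2 \<longrightarrow> \<bar>Im w0\<bar> / 2 \<le> \<bar>Im w\<bar>"
  proof (intro allI impI)
    fix w assume "dist w w0 < \<bar>Im w0\<bar> / 2"
    then have "\<bar>Im w - Im w0\<bar> < \<bar>Im w0\<bar> / 2"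
      using abs_Im_le_cmod[of "w - w0"] by (simp add: dist_norm)
    then show "\<bar>Im w0\<bar> / 2 \<le> \<bar>Im w\<bar>" by linarith
  qed
  then show ?thesis unfolding eventually_at using d by blast
qed

context sa
begin

lemma res_cont:
  assumes w0: "Im w0 \<noteq> 0"
  shows "((\<lambda>w. R w c) \<longlongrightarrow> R w0 c) (at w0)"
proof -
  define C where "C = 2 * norm (R w0 c) / \<bar>Im w0\<bar>"
  have ev: "eventually (\<lambda>w. norm (R w c - R w0 c) \<le> C * cmod (w - w0)) (at w0)"
    using eventually_Im_half[OF w0]
  proof (rule eventually_mono)
    fix w assume h: "\<bar>Im w0\<bar> / 2 \<le> \<bar>Im w\<bar>"
    then have w: "Im w \<noteq> 0" using w0 by auto
    have "norm (R w c - R w0 c) = cmod (w - w0) * norm (R w (R w0 c))"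
      by (simp add: res_ident[OF w w0] norm_cscale)
    also have "\<dots> \<le> cmod (w - w0) * (norm (R w0 c) / \<bar>Im w\<bar>)"
      by (intro mult_left_mono res_bound'[OF w]) auto
    also have "\<dots> \<le> cmod (w - w0) * (norm (R w0 c) / (\<bar>Im w0\<bar> / 2))"
      using h w0 by (intro mult_left_mono divide_left_mono) auto
    also have "\<dots> = C * cmod (w - w0)" by (simp add: C_def field_simps)
    finally show "norm (R w c - R w0 c) \<le> C * cmod (w - w0)" .
  qed
  have "((\<lambda>w. C * cmod (w - w0)) \<longlongrightarrow> C * cmod (w0 - w0)) (at w0)"
    by (intro tendsto_intros)
  then have "((\<lambda>w. C * cmod (w - w0)) \<longlongrightarrow> 0) (at w0)" by simp
  then have "((\<lambda>w. R w c - R w0 c) \<longlongrightarrow> 0) (at w0)"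
    by (rule Lim_null_comparison[OF ev])
  then show ?thesis by (simp add: LIM_zero_iff)
qed

lemma res_inner_deriv:
  assumes w0: "Im w0 \<noteq> 0"
  shows "((\<lambda>w. cinner (R w a) b) has_field_derivative cinner (R w0 (R w0 a)) b) (at w0)"
  unfolding has_field_derivative_iff
proof -
  have l: "((\<lambda>w. cinner (R w (R w0 a)) b) \<longlongrightarrow> cinner (R w0 (R w0 a)) b) (at w0)"
    by (intro tendsto_intros res_cont w0)
  have ev: "eventually (\<lambda>w. cinner (R w (R w0 a)) b = (cinner (R w a) b - cinner (R w0 a) b) / (w - w0)) (at w0)"
  proof -
    have "eventually (\<lambda>w. w \<noteq> w0) (at w0)" by (simp add: eventually_at_filter)
    with eventually_Im_half[OF w0] show ?thesis
    proof (rule eventually_elim2)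
      fix w assume h: "\<bar>Im w0\<bar> / 2 \<le> \<bar>Im w\<bar>" "w \<noteq> w0"
      then have w: "Im w \<noteq> 0" using w0 by auto
      have "cinner (R w a) b - cinner (R w0 a) b = (w - w0) * cinner (R w (R w0 a)) b"
        by (simp add: cinner_diff_left[symmetric] res_ident[OF w w0] cinner_cscale_left)
      then show "cinner (R w (R w0 a)) b = (cinner (R w a) b - cinner (R w0 a) b) / (w - w0)"
        using h(2) by simp
    qed
  qed
  show "((\<lambda>w. (cinner (R w a) b - cinner (R w0 a) b) / (w - w0)) \<longlongrightarrow> cinner (R w0 (R w0 a)) b) (at w0)"
    by (rule Lim_transform_eventually[OF l ev])
qed

lemma res_inner_holo: "(\<lambda>w. cinner (R w a) b) holomorphic_on (- \<real>)"
  unfolding holomorphic_on_open[OF open_nonreal]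
  using res_inner_deriv complex_is_Real_iff by blast

end


lemma ninner_add_left: "ninner (x + y) z = ninner x z + ninner y z"
  by (simp add: ninner_def distrib_right sum.distrib)

lemma ninner_add_right: "ninner x (y + z) = ninner x y + ninner x z"
  by (simp add: ninner_def distrib_left sum.distrib)

lemma ninner_scale_left: "ninner (a *s x) y = a * ninner x y"
  by (simp add: ninner_def sum_distrib_left mult.assoc)

lemma ninner_scale_right: "ninner x (a *s y) = cnj a * ninner x y"
  by (simp add: ninner_def sum_distrib_left algebra_simps)

lemma ninner_commute: "ninner y x = cnj (ninner x y)"
  by (simp add: ninner_def mult.commute)

lemma ninner_zero_left [simp]: "ninner 0 y = 0" by (simp add: ninner_def)
lemma ninner_zero_right [simp]: "ninner x 0 = 0" by (simp add: ninner_def)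

lemma ninner_minus_left: "ninner (- x) y = - ninner x y"
  by (simp add: ninner_def sum_negf)

lemma ninner_minus_right: "ninner x (- y) = - ninner x y"
  by (simp add: ninner_def sum_negf)

lemma ninner_diff_left: "ninner (x - y) z = ninner x z - ninner y z"
  by (simp add: ninner_def left_diff_distrib sum_subtractf)

lemma ninner_diff_right: "ninner x (y - z) = ninner x y - ninner x z"
  by (simp add: ninner_def right_diff_distrib sum_subtractf)

lemma ninner_sum_left: "ninner (\<Sum>i\<in>S. f i) y = (\<Sum>i\<in>S. ninner (f i) y)"
  by (induction S rule: infinite_finite_induct) (auto simp: ninner_add_left)

lemma ninner_sum_right: "ninner y (\<Sum>i\<in>S. f i) = (\<Sum>i\<in>S. ninner y (f i))"
  by (induction S rule: infinite_finite_induct) (auto simp: ninner_add_right)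

lemma ninner_axis_right: "ninner x (axis i 1) = x $ i"
proof -
  have "ninner x (axis i 1) = (\<Sum>j\<in>UNIV. if j = i then x $ i else 0)"
    unfolding ninner_def by (intro sum.cong) (auto simp: axis_def)
  then show ?thesis by simp
qed

lemma ninner_axis_left: "ninner (axis i 1) x = cnj (x $ i)"
  using ninner_axis_right[of x i] ninner_commute[of "axis i 1" x] by simp

lemma norm_vec_sq: "(norm (x::complex^'n))\<^sup>2 = (\<Sum>i\<in>UNIV. (cmod (x $ i))\<^sup>2)"
  unfolding norm_vec_def L2_set_def by (simp add: sum_nonneg)

lemma ninner_self: "ninner x x = complex_of_real ((norm x)\<^sup>2)"
proof -
  have "ninner x x = (\<Sum>i\<in>UNIV. complex_of_real ((cmod (x $ i))\<^sup>2))"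
    unfolding ninner_def by (intro sum.cong refl) (rule complex_norm_square[symmetric])
  then show ?thesis by (simp add: norm_vec_sq del: of_real_power)
qed

lemma ninner_self_Re: "Re (ninner x x) = (norm x)\<^sup>2"
  by (simp add: ninner_self del: of_real_power)

lemma ninner_cauchy_schwarz: "cmod (ninner x y) \<le> norm x * norm y"
proof -
  have "cmod (ninner x y) \<le> (\<Sum>i\<in>UNIV. cmod (x $ i) * cmod (y $ i))"
    unfolding ninner_def by (rule order_trans[OF norm_sum]) (simp add: norm_mult)
  also have "\<dots> \<le> L2_set (\<lambda>i. cmod (x $ i)) UNIV * L2_set (\<lambda>i. cmod (y $ i)) UNIV"
    using L2_set_mult_ineq[of "\<lambda>i. cmod (x $ i)" "\<lambda>i. cmod (y $ i)" UNIV] by simp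
  finally show ?thesis by (simp add: norm_vec_def)
qed

lemma cadj_cadj [simp]: "cadj (cadj M) = M"
  by (simp add: cadj_def vec_eq_iff)

lemma cadj_mult: "cadj (X ** Y) = cadj Y ** cadj X"
  by (simp add: cadj_def matrix_matrix_mult_def vec_eq_iff mult.commute)

lemma cadj_add: "cadj (X + Y) = cadj X + cadj Y"
  by (simp add: cadj_def vec_eq_iff)

lemma cadj_diff: "cadj (X - Y) = cadj X - cadj Y"
  by (simp add: cadj_def vec_eq_iff)

lemma cadj_minus: "cadj (- X) = - cadj X"
  by (simp add: cadj_def vec_eq_iff)

lemma cadj_mat: "cadj (mat z) = mat (cnj z)"
  by (simp add: cadj_def vec_eq_iff mat_def)

lemma ninner_mult_left: "ninner (X *v x) y = ninner x (cadj X *v y)"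
proof -
  have "ninner (X *v x) y = (\<Sum>i\<in>UNIV. \<Sum>j\<in>UNIV. X $ i $ j * x $ j * cnj (y $ i))"
    unfolding ninner_def matrix_vector_mult_def by (simp add: sum_distrib_right)
  also have "\<dots> = (\<Sum>j\<in>UNIV. \<Sum>i\<in>UNIV. X $ i $ j * x $ j * cnj (y $ i))"
    by (rule sum.swap)
  also have "\<dots> = ninner x (cadj X *v y)"
    unfolding ninner_def matrix_vector_mult_def cadj_def
    by (simp add: sum_distrib_left algebra_simps)
  finally show ?thesis .
qed

lemma ninner_mult_right: "ninner x (X *v y) = ninner (cadj X *v x) y"
  using ninner_mult_left[of "cadj X" x y] by simp

lemma mat_mult_vec: "mat z *v x = z *s (x::complex^'n)"
proof -
  have "(\<Sum>j\<in>UNIV. (if i = j then z else 0) * x $ j) = (\<Sum>j\<in>UNIV. if j = i then z * x $ i else 0)" for i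
    by (rule sum.cong) auto
  then show ?thesis by (simp add: vec_eq_iff matrix_vector_mult_def mat_def)
qed

lemma inv_of_det:
  assumes "det (X::complex^'n^'n) \<noteq> 0"
  shows "X ** matrix_inv X = mat 1 \<and> matrix_inv X ** X = mat 1"
proof -
  have "invertible X" using assms invertible_det_nz by blast
  then show ?thesis unfolding invertible_def matrix_inv_def by (rule someI_ex)
qed

lemma det_of_left_inv:
  assumes "(Y::complex^'n^'n) ** X = mat 1"
  shows "det X \<noteq> 0"
proof -
  have "X ** Y = mat 1" using assms matrix_left_right_inverse by blast
  then have "invertible X" unfolding invertible_def using assms by blast
  then show ?thesis using invertible_det_nz by blast
qed

lemma det_of_inj:
  assumes "\<And>x. (X::complex^'n^'n) *v x = 0 \<Longrightarrow> x = 0"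
  shows "det X \<noteq> 0"
  using assms matrix_left_invertible_ker det_of_left_inv by blast

lemma matrix_inv_cadj:
  assumes "det (X::complex^'n^'n) \<noteq> 0"
  shows "matrix_inv (cadj X) = cadj (matrix_inv X)"
proof -
  have i: "X ** matrix_inv X = mat 1" "matrix_inv X ** X = mat 1" using inv_of_det[OF assms] by auto
  have c1: "cadj (matrix_inv X) ** cadj X = mat 1" using i(1) by (metis cadj_mult cadj_mat complex_cnj_one)
  then have d: "det (cadj X) \<noteq> 0" by (rule det_of_left_inv)
  have i2: "cadj X ** matrix_inv (cadj X) = mat 1" using inv_of_det[OF d] by auto
  have "matrix_inv (cadj X) = (cadj (matrix_inv X) ** cadj X) ** matrix_inv (cadj X)"
    by (simp add: c1)
  also have "\<dots> = cadj (matrix_inv X)" by (simp add: matrix_mul_assoc[symmetric] i2)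
  finally show ?thesis .
qed


locale tf = sa DA A for DA :: "'a::chilbert set" and A +
  fixes B :: "'a \<Rightarrow> complex^'n" and Bs :: "complex^'n \<Rightarrow> 'a" and D :: "complex^'n^'n"
  assumes bop: "bounded_op B" and adj: "is_adjoint B Bs" and herm: "cadj D = D"
begin

lemma B_add: "B (x + y) = B x + B y" and B_scale: "B (a *\<^sub>C x) = a *s B x"
  using bop unfolding bounded_op_def by blast+

lemma adjB: "ninner (B x) f = cinner x (Bs f)"
  using adj unfolding is_adjoint_def by blast

lemma B_comp: "B x $ i = cinner x (Bs (axis i 1))"
  using adjB[of x "axis i 1"] by (simp add: ninner_axis_right)

lemma Bs_add: "Bs (f + g) = Bs f + Bs g"
proof -
  have "cinner x (Bs (f + g) - (Bs f + Bs g)) = 0" for x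
    using adjB[of x "f + g"] adjB[of x f] adjB[of x g]
    by (simp add: cinner_diff_right cinner_add_right ninner_add_right)
  then show ?thesis using cinner_eq_zero_all by fastforce
qed

lemma Bs_scale: "Bs (a *s f) = a *\<^sub>C Bs f"
proof -
  have "cinner x (Bs (a *s f) - a *\<^sub>C Bs f) = 0" for x
    using adjB[of x "a *s f"] adjB[of x f]
    by (simp add: cinner_diff_right cinner_cscale_right ninner_scale_right)
  then show ?thesis using cinner_eq_zero_all by fastforce
qed

lemma Bs_zero: "Bs 0 = 0"
  using Bs_scale[of 0 0] by simp

lemma Bs_sum: "Bs (\<Sum>i\<in>S. f i) = (\<Sum>i\<in>S. Bs (f i))"
  by (induction S rule: infinite_finite_induct) (auto simp: Bs_zero Bs_add)

lemma Bs_expand: "Bs x = (\<Sum>j\<in>UNIV. x $ j *\<^sub>C Bs (axis j 1))"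
proof -
  have "Bs x = Bs (\<Sum>j\<in>UNIV. x $ j *s axis j 1)" by (simp add: basis_expansion)
  also have "\<dots> = (\<Sum>j\<in>UNIV. x $ j *\<^sub>C Bs (axis j 1))" by (simp add: Bs_sum Bs_scale)
  finally show ?thesis .
qed

lemma Bs_bound: "\<exists>K>0. \<forall>f. norm (Bs f) \<le> K * norm f"
proof -
  obtain K0 where K0: "\<forall>x. norm (B x) \<le> K0 * norm x" using bop unfolding bounded_op_def by blast
  define K where "K = max K0 1"
  have K: "K > 0" "\<And>x. norm (B x) \<le> K * norm x"
    using K0 unfolding K_def by (auto intro: order_trans[OF _ mult_right_mono])
  have "norm (Bs f) \<le> K * norm f" for f
  proof -
    have "(norm (Bs f))\<^sup>2 = cmod (cinner (Bs f) (Bs f))" by (simp add: cinner_self_norm norm_power)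
    also have "cinner (Bs f) (Bs f) = ninner (B (Bs f)) f" by (simp add: adjB)
    also have "cmod (ninner (B (Bs f)) f) \<le> norm (B (Bs f)) * norm f" by (rule ninner_cauchy_schwarz)
    also have "\<dots> \<le> K * norm (Bs f) * norm f" by (intro mult_right_mono K(2)) auto
    finally have "norm (Bs f) * norm (Bs f) \<le> (K * norm f) * norm (Bs f)"
      by (simp add: power2_eq_square algebra_simps)
    then show ?thesis
      by (cases "norm (Bs f) = 0") (use K in \<open>auto simp: mult_le_cancel_right\<close>)
  qed
  then show ?thesis using K by blast
qed

definition G :: "complex \<Rightarrow> complex^'n^'n" where
  "G z = (\<chi> i j. B (R z (Bs (axis j 1))) $ i)"

definition M :: "complex \<Rightarrow> complex^'n^'n" where
  "M z = D + G z - mat z"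

definition W :: "complex \<Rightarrow> complex^'n^'n" where
  "W z = matrix_inv (M z)"

abbreviation V where "V \<equiv> transfer_fun DA A B Bs D"

lemma V_eq: "V z = - W z"
  unfolding transfer_fun_def W_def M_def G_def by simp

lemma G_entry: "G z $ i $ j = cinner (R z (Bs (axis j 1))) (Bs (axis i 1))"
  by (simp add: G_def B_comp)

lemma G_mult:
  assumes z: "Im z \<noteq> 0"
  shows "G z *v x = B (R z (Bs x))"
proof -
  have "(G z *v x) $ i = B (R z (Bs x)) $ i" for i
  proof -
    have "(G z *v x) $ i = (\<Sum>j\<in>UNIV. cinner (x $ j *\<^sub>C R z (Bs (axis j 1))) (Bs (axis i 1)))"
      unfolding matrix_vector_mult_def by (simp add: G_entry cinner_cscale_left mult.commute)
    also have "\<dots> = cinner (R z (Bs x)) (Bs (axis i 1))"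
      by (simp add: Bs_expand[of x] res_sum[OF z] res_cscale[OF z] cinner_sum_left)
    finally show ?thesis by (simp add: B_comp)
  qed
  then show ?thesis by (simp add: vec_eq_iff)
qed

lemma G_inner: "Im z \<noteq> 0 \<Longrightarrow> ninner (G z *v x) y = cinner (R z (Bs x)) (Bs y)"
  by (simp add: G_mult adjB)

lemma cadj_G: "Im z \<noteq> 0 \<Longrightarrow> cadj (G z) = G (cnj z)"
  unfolding cadj_def vec_eq_iff
  by (simp add: G_entry cinner_commute[of "R z _"] res_adj)

lemma cadj_M: "Im z \<noteq> 0 \<Longrightarrow> cadj (M z) = M (cnj z)"
  by (simp add: M_def cadj_add cadj_diff cadj_G herm cadj_mat)

lemma D_real: "Im (ninner (D *v x) x) = 0"
proof -
  have "ninner (D *v x) x = ninner x (D *v x)" using ninner_mult_left[of D x x] herm by simp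
  also have "\<dots> = cnj (ninner (D *v x) x)" by (rule ninner_commute)
  finally have e: "ninner (D *v x) x = cnj (ninner (D *v x) x)" .
  have "Im (ninner (D *v x) x) = Im (cnj (ninner (D *v x) x))" by (simp only: e[symmetric])
  then show ?thesis by simp
qed

lemma M_inner:
  assumes z: "Im z \<noteq> 0"
  shows "ninner (M z *v x) x = ninner (D *v x) x + cinner (R z (Bs x)) (Bs x) - z * ninner x x"
  by (simp add: M_def matrix_vector_mult_add_rdistrib matrix_vector_mult_diff_rdistrib
      ninner_add_left ninner_diff_left G_inner[OF z] ninner_scale_left mat_mult_vec)

lemma M_Im:
  assumes z: "Im z \<noteq> 0"
  shows "Im (ninner (M z *v x) x) = Im z * ((norm (R z (Bs x)))\<^sup>2 - (norm x)\<^sup>2)"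
  using D_real[of x] res_Im[OF z, of "Bs x"]
  by (simp add: M_inner[OF z] ninner_self algebra_simps del: of_real_power)

end


lemma matrix_mul_rneg: "(X::complex^'n^'m) ** (- Y) = - (X ** Y)"
  by (simp add: matrix_matrix_mult_def vec_eq_iff sum_negf)

lemma matrix_mul_lneg: "(- X::complex^'n^'m) ** Y = - (X ** Y)"
  by (simp add: matrix_matrix_mult_def vec_eq_iff sum_negf)

lemma det_holo:
  fixes F :: "complex \<Rightarrow> complex^'n^'n"
  assumes "\<And>i j. (\<lambda>z. F z $ i $ j) holomorphic_on S"
  shows "(\<lambda>z. det (F z)) holomorphic_on S"
  unfolding det_def by (intro holomorphic_intros assms)

lemma tendsto_matmul_entry:
  fixes X Y :: "complex \<Rightarrow> complex^'n^'n"
  assumes "\<And>i j. ((\<lambda>w. X w $ i $ j) \<longlongrightarrow> X0 $ i $ j) F"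
      and "\<And>i j. ((\<lambda>w. Y w $ i $ j) \<longlongrightarrow> Y0 $ i $ j) F"
  shows "((\<lambda>w. (X w ** Y w) $ a $ b) \<longlongrightarrow> (X0 ** Y0) $ a $ b) F"
  unfolding matrix_matrix_mult_def by (simp, intro tendsto_intros assms)

context tf
begin

definition Kb where "Kb = (SOME K. K > 0 \<and> (\<forall>f. norm (Bs f) \<le> K * norm f))"

lemma Kb: "Kb > 0" "norm (Bs f) \<le> Kb * norm f"
  using someI_ex[OF Bs_bound] unfolding Kb_def by auto

lemma RBs_bound: "Im z \<noteq> 0 \<Longrightarrow> norm (R z (Bs f)) \<le> Kb * norm f / \<bar>Im z\<bar>"
proof -
  assume z: "Im z \<noteq> 0"
  have "norm (R z (Bs f)) \<le> norm (Bs f) / \<bar>Im z\<bar>" by (rule res_bound'[OF z])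
  also have "\<dots> \<le> Kb * norm f / \<bar>Im z\<bar>" by (intro divide_right_mono Kb(2)) auto
  finally show ?thesis .
qed

lemma M_inj:
  assumes z: "\<bar>Im z\<bar> > Kb" and x: "M z *v x = 0"
  shows "x = 0"
proof (rule ccontr)
  assume x0: "x \<noteq> 0"
  have z0: "Im z \<noteq> 0" using z Kb(1) by auto
  have "Im z * ((norm (R z (Bs x)))\<^sup>2 - (norm x)\<^sup>2) = 0" using M_Im[OF z0, of x] x by simp
  then have e: "norm (R z (Bs x)) = norm x" using z0 by simp
  have "norm (R z (Bs x)) \<le> Kb * norm x / \<bar>Im z\<bar>" by (rule RBs_bound[OF z0])
  also have "\<dots> < norm x" using z x0 Kb(1) by (simp add: field_simps)
  finally show False using e by simp
qed

lemma det_M_large: "\<bar>Im z\<bar> > Kb \<Longrightarrow> det (M z) \<noteq> 0"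
  using M_inj det_of_inj by blast

lemma G_holo: "(\<lambda>z. G z $ i $ j) holomorphic_on (- \<real>)"
  unfolding G_entry by (rule res_inner_holo)

lemma M_entry: "M z $ i $ j = D $ i $ j + G z $ i $ j - (if i = j then z else 0)"
  by (simp add: M_def mat_def)

lemma M_holo: "(\<lambda>z. M z $ i $ j) holomorphic_on (- \<real>)"
  unfolding M_entry by (cases "i = j") (auto intro!: holomorphic_intros G_holo)

lemma detM_holo: "(\<lambda>z. det (M z)) holomorphic_on (- \<real>)"
  by (rule det_holo[OF M_holo])

definition cram where
  "cram k j z = det (\<chi> a b. if b = k then axis j 1 $ a else M z $ a $ b)"

lemma cram_holo: "(\<lambda>z. cram k j z) holomorphic_on (- \<real>)"
  unfolding cram_def
proof (rule det_holo)
  fix a b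
  show "(\<lambda>z. (\<chi> a b. if b = k then axis j 1 $ a else M z $ a $ b) $ a $ b) holomorphic_on - \<real>"
    by (cases "b = k") (auto intro: M_holo)
qed

lemma W_cram:
  assumes "det (M z) \<noteq> 0"
  shows "W z $ k $ j = cram k j z / det (M z)"
proof -
  have "M z ** W z = mat 1" using inv_of_det[OF assms] by (simp add: W_def)
  then have "M z *v (\<chi> k. W z $ k $ j) = axis j 1"
    by (auto simp: vec_eq_iff matrix_matrix_mult_def matrix_vector_mult_def mat_def axis_def
        dest!: arg_cong[where f="\<lambda>X. X $ _ $ j"])
  then have "(\<chi> k. W z $ k $ j) = (\<chi> k. cram k j z / det (M z))"
    unfolding cramer[OF assms] cram_def by simp
  then show ?thesis by (metis vec_lambda_beta)
qed

lemma V_cram: "det (M z) \<noteq> 0 \<Longrightarrow> V z $ i $ j = - (cram i j z / det (M z))"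
  by (simp add: V_eq W_cram)

lemma nonzero_open: "open {z. Im z \<noteq> 0 \<and> det (M z) \<noteq> 0}"
proof -
  have "open (- \<real> \<inter> (\<lambda>z. det (M z)) -` (- {0}))"
    by (intro continuous_open_preimage holomorphic_on_imp_continuous_on detM_holo open_nonreal) auto
  also have "- \<real> \<inter> (\<lambda>z. det (M z)) -` (- {0}) = {z. Im z \<noteq> 0 \<and> det (M z) \<noteq> 0}"
    by (auto simp: complex_is_Real_iff)
  finally show ?thesis .
qed

lemma V_analytic:
  assumes "Im z \<noteq> 0" "det (M z) \<noteq> 0"
  shows "entry V i j analytic_on {z}"
proof -
  define U where "U = {z. Im z \<noteq> 0 \<and> det (M z) \<noteq> 0}"
  have "(\<lambda>w. - (cram i j w / det (M w))) holomorphic_on U"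
    unfolding U_def
    by (intro holomorphic_intros holomorphic_on_subset[OF cram_holo] holomorphic_on_subset[OF detM_holo])
       (auto simp: complex_is_Real_iff)
  then have "entry V i j holomorphic_on U"
    by (rule holomorphic_transform) (auto simp: U_def entry_def V_cram)
  then have "entry V i j analytic_on U" using nonzero_open analytic_on_open U_def by blast
  then show ?thesis using assms analytic_on_subset U_def by blast
qed

lemma isolated_zeros:
  assumes z0: "Im z0 \<noteq> 0"
  shows "eventually (\<lambda>w. det (M w) \<noteq> 0) (at z0)"
proof (rule ccontr)
  assume ne: "\<not> eventually (\<lambda>w. det (M w) \<noteq> 0) (at z0)"
  define S where "S = (if Im z0 > 0 then {w. Im w > 0} else {w. Im w < 0})"
  define p where "p = (if Im z0 > 0 then \<i> * complex_of_real (Kb + 1) else - \<i> * complex_of_real (Kb + 1))"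
  have Sopen: "open S" by (simp add: S_def open_halfspace_Im_gt open_halfspace_Im_lt)
  have Sconn: "connected S"
    by (simp add: S_def convex_connected convex_halfspace_Im_gt convex_halfspace_Im_lt)
  have Ssub: "S \<subseteq> - \<real>" by (auto simp: S_def complex_is_Real_iff)
  have z0S: "z0 \<in> S" using z0 by (auto simp: S_def)
  have pS: "p \<in> S" using Kb(1) by (auto simp: S_def p_def)
  have "z0 islimpt {w. det (M w) = 0}"
    using ne by (simp add: islimpt_iff_eventually)
  then have lim: "z0 islimpt {w. det (M w) = 0} \<inter> S"
    using Sopen z0S by (intro islimpt_Int_eventually) (auto intro: eventually_at_in_open')
  have "det (M p) = 0"
    by (rule analytic_continuation[OF holomorphic_on_subset[OF detM_holo Ssub] Sopen Sconn _ z0S lim])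
       (use pS in auto)
  moreover have "\<bar>Im p\<bar> > Kb" using Kb(1) by (simp add: p_def)
  ultimately show False using det_M_large by blast
qed

lemma holdom_char: "holdom V = {z. Im z \<noteq> 0 \<and> det (M z) \<noteq> 0}"
proof (intro set_eqI iffI)
  fix z assume "z \<in> {z. Im z \<noteq> 0 \<and> det (M z) \<noteq> 0}"
  then show "z \<in> holdom V" using V_analytic by (auto simp: holdom_def complex_is_Real_iff)
next
  fix z0 assume h: "z0 \<in> holdom V"
  then have z0: "Im z0 \<noteq> 0" and an: "\<And>i j. entry V i j analytic_on {z0}"
    by (auto simp: holdom_def complex_is_Real_iff)
  have Mc: "((\<lambda>w. M w $ i $ j) \<longlongrightarrow> M z0 $ i $ j) (at z0)" for i j
  proof -
    have "continuous_on (- \<real>) (\<lambda>w. M w $ i $ j)" by (rule holomorphic_on_imp_continuous_on[OF M_holo])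
    then have "isCont (\<lambda>w. M w $ i $ j) z0"
      using z0 open_nonreal by (simp add: continuous_on_eq_continuous_at complex_is_Real_iff)
    then show ?thesis by (simp add: isCont_def)
  qed
  have Vc: "((\<lambda>w. V w $ i $ j) \<longlongrightarrow> V z0 $ i $ j) (at z0)" for i j
    using analytic_at_imp_isCont[OF an[of i j]] by (simp add: isCont_def entry_def)
  have l: "((\<lambda>w. (M w ** V w) $ a $ b) \<longlongrightarrow> (M z0 ** V z0) $ a $ b) (at z0)" for a b
    by (rule tendsto_matmul_entry[OF Mc Vc])
  have ev: "eventually (\<lambda>w. (M w ** V w) $ a $ b = (- mat 1 :: complex^'n^'n) $ a $ b) (at z0)" for a b
    using isolated_zeros[OF z0]
  proof (rule eventually_mono)
    fix w assume "det (M w) \<noteq> 0"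
    then have "M w ** W w = mat 1" using inv_of_det[of "M w"] by (simp add: W_def)
    then show "(M w ** V w) $ a $ b = (- mat 1 :: complex^'n^'n) $ a $ b"
      by (simp add: V_eq matrix_mul_rneg)
  qed
  have "(M z0 ** V z0) $ a $ b = (- mat 1 :: complex^'n^'n) $ a $ b" for a b
    using tendsto_unique[OF trivial_limit_at l[of a b] tendsto_eventually[OF ev[of a b]]] by simp
  then have "M z0 ** V z0 = - mat 1" by (simp add: vec_eq_iff)
  then have "M z0 ** W z0 = mat 1" by (simp add: V_eq matrix_mul_rneg)
  then have "W z0 ** M z0 = mat 1" using matrix_left_right_inverse by blast
  then have "det (M z0) \<noteq> 0" by (rule det_of_left_inv)
  then show "z0 \<in> {z. Im z \<noteq> 0 \<and> det (M z) \<noteq> 0}" using z0 by simp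
qed

lemma V_meromorphic: "entry V i j meromorphic_on (- \<real>)"
  unfolding meromorphic_on_def
proof
  fix z0 :: complex assume "z0 \<in> - \<real>"
  then have z0: "Im z0 \<noteq> 0" by (simp add: complex_is_Real_iff)
  have an: "(\<lambda>w. cram i j w) analytic_on {z0}" "(\<lambda>w. det (M w)) analytic_on {z0}"
    using cram_holo detM_holo analytic_on_open[OF open_nonreal] analytic_on_subset z0
    by (metis Compl_iff complex_is_Real_iff empty_subsetI insert_subset)+
  have "(\<lambda>w. - (cram i j w / det (M w))) meromorphic_on {z0}"
    by (intro meromorphic_on_uminus meromorphic_on_divide analytic_on_imp_meromorphic_on an)
  moreover have "eventually (\<lambda>w. entry V i j w = - (cram i j w / det (M w))) (at z0)"
    using isolated_zeros[OF z0] by (rule eventually_mono) (simp add: entry_def V_cram)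
  ultimately have "entry V i j meromorphic_on {z0}"
    using meromorphic_on_cong[of "{z0}" "entry V i j" "\<lambda>w. - (cram i j w / det (M w))" "{z0}"] by simp
  then show "\<exists>F. (\<lambda>w. entry V i j (z0 + w)) has_laurent_expansion F"
    unfolding meromorphic_on_def by simp
qed

end


lemma matrix_sub_ldistrib: "(A::complex^'n^'m) ** (B - C) = A ** B - A ** C"
  by (simp add: matrix_matrix_mult_def vec_eq_iff sum_subtractf right_diff_distrib)

lemma matrix_sub_rdistrib: "((B::complex^'n^'m) - C) ** A = B ** A - C ** A"
  by (simp add: matrix_matrix_mult_def vec_eq_iff sum_subtractf left_diff_distrib)

context tf
begin

lemma opmat_mult:
  assumes add: "\<And>x y. T (x + y) = T x + T y" and sc: "\<And>a x. T (a *\<^sub>C x) = a *\<^sub>C T x"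
  shows "(\<chi> i j. B (T (Bs (axis j 1))) $ i) *v x = B (T (Bs x))"
proof -
  have Tsum: "T (\<Sum>j\<in>S. f j) = (\<Sum>j\<in>S. T (f j))" for S and f :: "'n \<Rightarrow> 'a"
  proof (induction S rule: infinite_finite_induct)
    case (infinite S) then show ?case using sc[of 0 0] by simp
  next
    case empty then show ?case using sc[of 0 0] by simp
  next
    case (insert x F) then show ?case by (simp add: add)
  qed
  have "((\<chi> i j. B (T (Bs (axis j 1))) $ i) *v x) $ i = B (T (Bs x)) $ i" for i
  proof -
    have "((\<chi> i j. B (T (Bs (axis j 1))) $ i) *v x) $ i
        = (\<Sum>j\<in>UNIV. cinner (x $ j *\<^sub>C T (Bs (axis j 1))) (Bs (axis i 1)))"
      unfolding matrix_vector_mult_def by (simp add: B_comp cinner_cscale_left mult.commute)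
    also have "\<dots> = cinner (T (Bs x)) (Bs (axis i 1))"
      by (simp add: Bs_expand[of x] Tsum sc cinner_sum_left)
    finally show ?thesis by (simp add: B_comp)
  qed
  then show ?thesis by (simp add: vec_eq_iff)
qed

definition E :: "complex \<Rightarrow> complex \<Rightarrow> complex^'n^'n" where
  "E z \<zeta> = (\<chi> i j. B (R (cnj z) (R \<zeta> (Bs (axis j 1)))) $ i) - mat 1"

lemma E_mult:
  assumes "Im z \<noteq> 0" "Im \<zeta> \<noteq> 0"
  shows "E z \<zeta> *v a = B (R (cnj z) (R \<zeta> (Bs a))) - a"
proof -
  have z': "Im (cnj z) \<noteq> 0" using assms by simp
  have "(\<chi> i j. B (R (cnj z) (R \<zeta> (Bs (axis j 1)))) $ i) *v a = B (R (cnj z) (R \<zeta> (Bs a)))"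
    by (rule opmat_mult[where T="\<lambda>u. R (cnj z) (R \<zeta> u)"]) (simp_all add: res_add res_cscale assms z')
  then show ?thesis unfolding E_def
    by (simp add: matrix_vector_mult_diff_rdistrib)
qed

lemma E_inner:
  assumes z: "Im z \<noteq> 0" and \<zeta>: "Im \<zeta> \<noteq> 0"
  shows "ninner (E z \<zeta> *v a) b = cinner (R (cnj z) (Bs a)) (R (cnj \<zeta>) (Bs b)) - ninner a b"
proof -
  have "ninner (E z \<zeta> *v a) b = cinner (R (cnj z) (R \<zeta> (Bs a))) (Bs b) - ninner a b"
    by (simp add: E_mult[OF z \<zeta>] ninner_diff_left adjB)
  also have "cinner (R (cnj z) (R \<zeta> (Bs a))) (Bs b) = cinner (R \<zeta> (R (cnj z) (Bs a))) (Bs b)"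
    using res_comm[of "cnj z" \<zeta>] z \<zeta> by simp
  also have "\<dots> = cinner (R (cnj z) (Bs a)) (R (cnj \<zeta>) (Bs b))"
    by (rule res_adj[OF \<zeta>])
  finally show ?thesis .
qed

lemma B_diff: "B (x - y) = B x - B y"
proof -
  have "B (x + (-1) *\<^sub>C y) = B x + (-1) *s B y" by (simp add: B_add B_scale)
  then show ?thesis by (simp add: cscale_minus_left vector_sneg_minus1[symmetric])
qed

lemma W_inv: "det (M z) \<noteq> 0 \<Longrightarrow> M z ** W z = mat 1 \<and> W z ** M z = mat 1"
  unfolding W_def by (rule inv_of_det)

lemma det_cnj:
  assumes z: "Im z \<noteq> 0" and d: "det (M z) \<noteq> 0"
  shows "det (M (cnj z)) \<noteq> 0"
proof -
  have "cadj (M z ** W z) = cadj (mat 1)" using W_inv[OF d] by simp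
  then have "cadj (W z) ** cadj (M z) = mat 1" by (simp add: cadj_mult cadj_mat)
  then have "det (cadj (M z)) \<noteq> 0" by (rule det_of_left_inv)
  then show ?thesis using cadj_M[OF z] by simp
qed

lemma W_cnj:
  assumes z: "Im z \<noteq> 0" and d: "det (M z) \<noteq> 0"
  shows "W (cnj z) = cadj (W z)"
  unfolding W_def cadj_M[OF z, symmetric] by (rule matrix_inv_cadj[OF d])

lemma holdom_cnj:
  assumes "z \<in> holdom V"
  shows "cnj z \<in> holdom V \<and> V (cnj z) = cadj (V z)"
  using assms det_cnj W_cnj unfolding holdom_char by (auto simp: V_eq cadj_minus)

lemma M_diff_E:
  assumes z: "Im z \<noteq> 0" and \<zeta>: "Im \<zeta> \<noteq> 0"
  shows "M \<zeta> - cadj (M z) = (\<chi> i j. (\<zeta> - cnj z) * E z \<zeta> $ i $ j)"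
proof -
  have z': "Im (cnj z) \<noteq> 0" using z by simp
  have "(M \<zeta> - M (cnj z)) $ i $ j = (\<zeta> - cnj z) * E z \<zeta> $ i $ j" for i j
  proof -
    define b where "b = Bs (axis j 1)"
    have "R \<zeta> b - R (cnj z) b = (\<zeta> - cnj z) *\<^sub>C R (cnj z) (R \<zeta> b)"
      using res_ident[OF \<zeta> z', of b] res_comm[OF \<zeta> z', of b] by simp
    then have "B (R \<zeta> b) - B (R (cnj z) b) = (\<zeta> - cnj z) *s B (R (cnj z) (R \<zeta> b))"
      by (simp add: B_diff[symmetric] B_scale)
    then have "B (R \<zeta> b) $ i - B (R (cnj z) b) $ i = (\<zeta> - cnj z) * B (R (cnj z) (R \<zeta> b)) $ i"
      by (simp add: vec_eq_iff left_diff_distrib)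
    then have "G \<zeta> $ i $ j - G (cnj z) $ i $ j = (\<zeta> - cnj z) * B (R (cnj z) (R \<zeta> b)) $ i"
      by (simp add: G_def b_def)
    then show ?thesis
      by (simp add: M_def E_def mat_def b_def algebra_simps)
  qed
  then show ?thesis by (simp add: cadj_M[OF z] vec_eq_iff)
qed

lemma scal_mid: "(X ** (\<chi> i j. c * Y $ i $ j) ** Z) $ a $ b = c * ((X ** Y ** Z) $ a $ b)"
  for X Y Z :: "complex^'n^'n"
  by (simp add: matrix_matrix_mult_def sum_distrib_left sum_distrib_right mult.assoc mult.left_commute)

lemma NV_off:
  assumes z: "z \<in> holdom V" and \<zeta>: "\<zeta> \<in> holdom V" and ne: "\<zeta> \<noteq> cnj z"
  shows "NV V z \<zeta> = W \<zeta> ** E z \<zeta> ** cadj (W z)"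
proof -
  have z0: "Im z \<noteq> 0" "det (M z) \<noteq> 0" and \<zeta>0: "Im \<zeta> \<noteq> 0" "det (M \<zeta>) \<noteq> 0"
    using z \<zeta> unfolding holdom_char by auto
  have i1: "W \<zeta> ** M \<zeta> = mat 1" using W_inv[OF \<zeta>0(2)] by simp
  have "cadj (W z ** M z) = cadj (mat 1)" using W_inv[OF z0(2)] by simp
  then have i2: "cadj (M z) ** cadj (W z) = mat 1" by (simp add: cadj_mult cadj_mat)
  have "W \<zeta> ** (M \<zeta> - cadj (M z)) ** cadj (W z) = cadj (W z) - W \<zeta>"
    by (simp add: matrix_sub_ldistrib matrix_sub_rdistrib matrix_mul_assoc[symmetric] i2)
       (simp add: matrix_mul_assoc i1)
  then have e: "(\<zeta> - cnj z) * ((W \<zeta> ** E z \<zeta> ** cadj (W z)) $ i $ j) = (cadj (W z) - W \<zeta>) $ i $ j" for i j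
    using scal_mid[of "W \<zeta>" "\<zeta> - cnj z" "E z \<zeta>" "cadj (W z)" i j] M_diff_E[OF z0(1) \<zeta>0(1)] by simp
  have nz: "\<zeta> - cnj z \<noteq> 0" using ne by simp
  show ?thesis
    unfolding NV_def using ne nz e
    by (simp add: vec_eq_iff V_eq cadj_def field_simps)
qed

lemma E_cont:
  assumes \<zeta>: "Im \<zeta> \<noteq> 0" and z: "Im z \<noteq> 0"
  shows "((\<lambda>w. E z w $ a $ b) \<longlongrightarrow> E z \<zeta> $ a $ b) (at \<zeta>)"
proof -
  have z': "Im (cnj z) \<noteq> 0" using z by simp
  have e: "E z w $ a $ b = cinner (R w (Bs (axis b 1))) (R z (Bs (axis a 1))) - (if a = b then 1 else 0)" for w
    using res_adj[OF z', of "R w (Bs (axis b 1))" "Bs (axis a 1)"]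
    by (simp add: E_def B_comp mat_def)
  show ?thesis unfolding e by (intro tendsto_intros res_cont \<zeta>)
qed

lemma NV_diag:
  assumes z: "z \<in> holdom V"
  shows "NV V z (cnj z) = W (cnj z) ** E z (cnj z) ** cadj (W z)"
proof -
  define \<zeta> where "\<zeta> = cnj z"
  have z0: "Im z \<noteq> 0" "det (M z) \<noteq> 0" using z unfolding holdom_char by auto
  have \<zeta>h: "\<zeta> \<in> holdom V" and Vz: "V \<zeta> = cadj (V z)" using holdom_cnj[OF z] by (auto simp: \<zeta>_def)
  have \<zeta>0: "Im \<zeta> \<noteq> 0" "det (M \<zeta>) \<noteq> 0" using \<zeta>h unfolding holdom_char by auto
  have an: "entry V i j analytic_on {\<zeta>}" for i j using \<zeta>h by (simp add: holdom_def)
  have "deriv (entry V i j) \<zeta> = (W \<zeta> ** E z \<zeta> ** cadj (W z)) $ i $ j" for i j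
  proof -
    have "(entry V i j has_field_derivative deriv (entry V i j) \<zeta>) (at \<zeta>)"
      using analytic_on_imp_differentiable_at[OF an] DERIV_deriv_iff_field_differentiable by blast
    then have l1: "((\<lambda>w. (entry V i j w - entry V i j \<zeta>) / (w - \<zeta>)) \<longlongrightarrow> deriv (entry V i j) \<zeta>) (at \<zeta>)"
      by (simp add: has_field_derivative_iff)
    have Wc: "((\<lambda>w. W w $ a $ b) \<longlongrightarrow> W \<zeta> $ a $ b) (at \<zeta>)" for a b
      using analytic_at_imp_isCont[OF an[of a b]] by (simp add: isCont_def entry_def V_eq tendsto_minus_cancel_left)
    have l2: "((\<lambda>w. (W w ** E z w ** cadj (W z)) $ i $ j) \<longlongrightarrow> (W \<zeta> ** E z \<zeta> ** cadj (W z)) $ i $ j) (at \<zeta>)"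
      by (intro tendsto_matmul_entry Wc E_cont \<zeta>0(1) z0(1) tendsto_const)
    have ev: "eventually (\<lambda>w. (W w ** E z w ** cadj (W z)) $ i $ j = (entry V i j w - entry V i j \<zeta>) / (w - \<zeta>)) (at \<zeta>)"
    proof -
      have "eventually (\<lambda>w. w \<noteq> \<zeta>) (at \<zeta>)" by (simp add: eventually_at_filter)
      moreover have "eventually (\<lambda>w. \<bar>Im \<zeta>\<bar> / 2 \<le> \<bar>Im w\<bar>) (at \<zeta>)" by (rule eventually_Im_half[OF \<zeta>0(1)])
      moreover have "eventually (\<lambda>w. det (M w) \<noteq> 0) (at \<zeta>)" by (rule isolated_zeros[OF \<zeta>0(1)])
      ultimately show ?thesis
      proof eventually_elim
        case (elim w)
        then have wh: "w \<in> holdom V" using \<zeta>0(1) unfolding holdom_char by auto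
        have "NV V z w = W w ** E z w ** cadj (W z)"
          using NV_off[OF z wh] elim(1) by (simp add: \<zeta>_def)
        then have "(W w ** E z w ** cadj (W z)) $ i $ j = NV V z w $ i $ j" by simp
        also have "\<dots> = (V w $ i $ j - cnj (V z $ j $ i)) / (w - cnj z)"
          using elim(1) by (simp add: NV_def \<zeta>_def)
        also have "cnj (V z $ j $ i) = V \<zeta> $ i $ j" by (simp add: Vz cadj_def)
        finally show ?case by (simp add: entry_def \<zeta>_def)
      qed
    qed
    have l3: "((\<lambda>w. (entry V i j w - entry V i j \<zeta>) / (w - \<zeta>)) \<longlongrightarrow> (W \<zeta> ** E z \<zeta> ** cadj (W z)) $ i $ j) (at \<zeta>)"
      by (rule Lim_transform_eventually[OF l2 ev])
    show ?thesis using tendsto_unique[OF trivial_limit_at l1 l3] .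
  qed
  then show ?thesis unfolding NV_def \<zeta>_def[symmetric] by (simp add: vec_eq_iff)
qed

lemma NV_formula:
  assumes "z \<in> holdom V" "\<zeta> \<in> holdom V"
  shows "NV V z \<zeta> = W \<zeta> ** E z \<zeta> ** cadj (W z)"
  using NV_off[OF assms] NV_diag[OF assms(1)] by (cases "\<zeta> = cnj z") auto

end


lemma lin_dep:
  fixes p :: "nat \<Rightarrow> complex^'n"
  shows "\<exists>c. (\<exists>l<Suc CARD('n). c l \<noteq> 0) \<and> (\<Sum>l<Suc CARD('n). c l *s p l) = 0"
proof (cases "inj_on p {..<Suc CARD('n)}")
  case False
  then obtain l1 l2 where l: "l1 < Suc CARD('n)" "l2 < Suc CARD('n)" "l1 \<noteq> l2" "p l1 = p l2"
    unfolding inj_on_def by auto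
  define c :: "nat \<Rightarrow> complex" where "c l = (if l = l1 then 1 else if l = l2 then -1 else 0)" for l
  have "(\<Sum>l<Suc CARD('n). c l *s p l) = (\<Sum>l\<in>{l1, l2}. c l *s p l)"
    by (rule sum.mono_neutral_right) (use l in \<open>auto simp: c_def\<close>)
  also have "\<dots> = 0" using l by (simp add: c_def)
  finally show ?thesis using l by (intro exI[of _ c]) (auto simp: c_def)
next
  case True
  define P where "P = p ` {..<Suc CARD('n)}"
  have cP: "card P = Suc CARD('n)" unfolding P_def using True by (simp add: card_image)
  have "vec.dependent P"
  proof (rule ccontr)
    assume "\<not> vec.dependent P"
    then have "card P \<le> vec.dim P" using vec.independent_bound_general by blast
    also have "\<dots> \<le> CARD('n)" by (rule dim_subset_UNIV_cart_gen)
    finally show False using cP by simp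
  qed
  then obtain T U where T: "finite T" "T \<subseteq> P" "(\<Sum>v\<in>T. U v *s v) = 0" "\<exists>v\<in>T. U v \<noteq> 0"
    unfolding vec.dependent_explicit by blast
  define c where "c l = (if p l \<in> T then U (p l) else 0)" for l
  have "(\<Sum>l<Suc CARD('n). c l *s p l) = (\<Sum>v\<in>P. (if v \<in> T then U v else 0) *s v)"
    unfolding P_def c_def by (subst sum.reindex[OF True]) simp
  also have "\<dots> = (\<Sum>v\<in>T. U v *s v)"
    using T(1,2) by (intro sum.mono_neutral_cong_right) (auto simp: P_def)
  finally have s0: "(\<Sum>l<Suc CARD('n). c l *s p l) = 0" using T(3) by simp
  obtain v where v: "v \<in> T" "U v \<noteq> 0" using T(4) by blast
  then obtain l where "l < Suc CARD('n)" "p l = v" using T(2) by (auto simp: P_def)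
  then have "\<exists>l<Suc CARD('n). c l \<noteq> 0" using v by (intro exI[of _ l]) (auto simp: c_def)
  then show ?thesis using s0 by blast
qed

context tf
begin

lemma term_eq:
  assumes zj: "zj \<in> holdom V" and zk: "zk \<in> holdom V"
  shows "ninner (NV V zj zk *v hj) hk
    = cinner (R (cnj zj) (Bs (cadj (W zj) *v hj))) (R (cnj zk) (Bs (cadj (W zk) *v hk)))
      - ninner (cadj (W zj) *v hj) (cadj (W zk) *v hk)"
proof -
  have j: "Im zj \<noteq> 0" and k: "Im zk \<noteq> 0" using zj zk unfolding holdom_char by auto
  have "ninner (NV V zj zk *v hj) hk = ninner (W zk *v (E zj zk *v (cadj (W zj) *v hj))) hk"
    by (simp add: NV_formula[OF zj zk] matrix_vector_mul_assoc[symmetric])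
  also have "\<dots> = ninner (E zj zk *v (cadj (W zj) *v hj)) (cadj (W zk) *v hk)"
    by (rule ninner_mult_left)
  finally show ?thesis by (simp add: E_inner[OF j k])
qed

lemma cinner_sums: "cinner (\<Sum>j\<in>S. a j *\<^sub>C Y j) (\<Sum>k\<in>T. b k *\<^sub>C Z k)
   = (\<Sum>j\<in>S. \<Sum>k\<in>T. a j * cnj (b k) * cinner (Y j) (Z k))"
  for Y Z :: "nat \<Rightarrow> 'a"
  by (simp add: cinner_sum_left cinner_sum_right cinner_cscale_left cinner_cscale_right
      sum_distrib_left mult.assoc) (subst sum.swap, simp add: mult.left_commute)

lemma ninner_sums: "ninner (\<Sum>j\<in>S. a j *s Y j) (\<Sum>k\<in>T. b k *s Z k)
   = (\<Sum>j\<in>S. \<Sum>k\<in>T. a j * cnj (b k) * ninner (Y j) (Z k))"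
  by (simp add: ninner_sum_left ninner_sum_right ninner_scale_left ninner_scale_right
      sum_distrib_left mult.assoc) (subst sum.swap, simp add: mult.left_commute)

lemma kform_eq:
  assumes h: "\<forall>k<m. zs k \<in> holdom V"
  shows "kform V m zs hs \<xi> =
     cinner (\<Sum>j<m. \<xi> j *\<^sub>C R (cnj (zs j)) (Bs (cadj (W (zs j)) *v hs j)))
            (\<Sum>j<m. \<xi> j *\<^sub>C R (cnj (zs j)) (Bs (cadj (W (zs j)) *v hs j)))
   - ninner (\<Sum>j<m. \<xi> j *s (cadj (W (zs j)) *v hs j)) (\<Sum>j<m. \<xi> j *s (cadj (W (zs j)) *v hs j))"
proof -
  define w where "w j = cadj (W (zs j)) *v hs j" for j
  define Y where "Y j = R (cnj (zs j)) (Bs (w j))" for j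
  have "kform V m zs hs \<xi> = (\<Sum>j<m. \<Sum>k<m. (cinner (Y j) (Y k) - ninner (w j) (w k)) * \<xi> j * cnj (\<xi> k))"
    unfolding kform_def using h by (intro sum.cong refl) (simp add: term_eq w_def Y_def)
  also have "\<dots> = cinner (\<Sum>j<m. \<xi> j *\<^sub>C Y j) (\<Sum>j<m. \<xi> j *\<^sub>C Y j)
            - ninner (\<Sum>j<m. \<xi> j *s w j) (\<Sum>j<m. \<xi> j *s w j)"
    unfolding cinner_sums ninner_sums sum_subtractf[symmetric]
    by (intro sum.cong refl) (simp add: algebra_simps)
  finally show ?thesis by (simp add: w_def Y_def)
qed

lemma kform_Re:
  assumes h: "\<forall>k<m. zs k \<in> holdom V"
  shows "Re (kform V m zs hs \<xi>) =
     (norm (\<Sum>j<m. \<xi> j *\<^sub>C R (cnj (zs j)) (Bs (cadj (W (zs j)) *v hs j))))\<^sup>2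
   - (norm (\<Sum>j<m. \<xi> j *s (cadj (W (zs j)) *v hs j)))\<^sup>2"
  unfolding kform_eq[OF h] by (simp add: ninner_self_Re)

lemma no_more:
  assumes h: "\<forall>k<m. zs k \<in> holdom V"
  shows "\<not> neg_squares_ge (kform V m zs hs) (Suc CARD('n))"
proof
  assume "neg_squares_ge (kform V m zs hs) (Suc CARD('n))"
  then obtain u where u: "\<And>c. (\<exists>l<Suc CARD('n). c l \<noteq> 0) \<Longrightarrow>
      Re (kform V m zs hs (\<lambda>j. \<Sum>l<Suc CARD('n). c l * u l j)) < 0"
    unfolding neg_squares_ge_def by blast
  define w where "w j = cadj (W (zs j)) *v hs j" for j
  obtain c where c: "\<exists>l<Suc CARD('n). c l \<noteq> 0"
    "(\<Sum>l<Suc CARD('n). c l *s (\<Sum>j<m. u l j *s w j)) = 0"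
    using lin_dep[of "\<lambda>l. \<Sum>j<m. u l j *s w j"] by blast
  have "(\<Sum>j<m. (\<Sum>l<Suc CARD('n). c l * u l j) *s w j) = (\<Sum>l<Suc CARD('n). c l *s (\<Sum>j<m. u l j *s w j))"
    by (simp add: vec.scale_sum_right vector_smult_assoc scaleR_sum_left sum_distrib_right
        vec.scale_sum_left sum.swap[of _ "{..<m}"])
  also have "\<dots> = 0" by (rule c(2))
  finally have z: "(\<Sum>j<m. (\<Sum>l<Suc CARD('n). c l * u l j) *s w j) = 0" .
  have "Re (kform V m zs hs (\<lambda>j. \<Sum>l<Suc CARD('n). c l * u l j)) \<ge> 0"
    using z unfolding kform_Re[OF h] w_def by simp
  then show False using u[OF c(1)] by simp
qed

end


context tf
begin

lemma R_Bs_sum: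
  assumes "Im z \<noteq> 0"
  shows "(\<Sum>j\<in>S. a j *\<^sub>C R z (Bs (f j))) = R z (Bs (\<Sum>j\<in>S. a j *s f j))"
  by (simp add: Bs_sum Bs_scale res_sum[OF assms] res_cscale[OF assms])

lemma exists_neg: "\<exists>m zs hs. (\<forall>k<m. zs k \<in> holdom V) \<and> neg_squares_ge (kform V m zs hs) CARD('n)"
proof -
  define n where "n = CARD('n)"
  define z0 where "z0 = \<i> * complex_of_real (Kb + 1)"
  have Imz0: "Im z0 = Kb + 1" by (simp add: z0_def)
  have z0h: "z0 \<in> holdom V"
    unfolding holdom_char using Imz0 Kb(1) det_M_large[of z0] by auto
  have dz0: "det (M z0) \<noteq> 0" using z0h unfolding holdom_char by auto
  obtain \<sigma> where \<sigma>: "bij_betw \<sigma> {0..<n} (UNIV::'n set)"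
    using ex_bij_betw_nat_finite[of "UNIV::'n set"] by (auto simp: n_def)
  have \<sigma>inj: "inj_on \<sigma> {..<n}" using \<sigma> by (simp add: bij_betw_def atLeast0LessThan)
  define hs where "hs k = cadj (M z0) *v axis (\<sigma> k) 1" for k
  have "cadj (M z0 ** W z0) = cadj (mat 1)" using W_inv[OF dz0] by simp
  then have WM: "cadj (W z0) ** cadj (M z0) = mat 1" by (simp add: cadj_mult cadj_mat)
  have w: "cadj (W z0) *v hs k = axis (\<sigma> k) 1" for k
    by (simp add: hs_def matrix_vector_mul_assoc WM)
  define u :: "nat \<Rightarrow> nat \<Rightarrow> complex" where "u l j = (if l = j then 1 else 0)" for l j
  have "neg_squares_ge (kform V n (\<lambda>_. z0) hs) n"
    unfolding neg_squares_ge_def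
  proof (intro exI[of _ u] allI impI)
    fix c :: "nat \<Rightarrow> complex" assume c: "\<exists>l<n. c l \<noteq> 0"
    define \<xi> where "\<xi> j = (\<Sum>l<n. c l * u l j)" for j
    have \<xi>: "\<xi> j = c j" if "j < n" for j
      using that by (simp add: \<xi>_def u_def if_distrib cong: if_cong)
    define v where "v = (\<Sum>j<n. \<xi> j *s axis (\<sigma> j) 1)"
    obtain l where l: "l < n" "c l \<noteq> 0" using c by blast
    have "v $ \<sigma> l = (\<Sum>j<n. if j = l then \<xi> j else 0)"
      unfolding v_def sum_component
      by (intro sum.cong refl) (use \<sigma>inj l in \<open>auto simp: axis_def inj_on_def\<close>)
    also have "\<dots> = c l" using l \<xi> by simp
    finally have "v \<noteq> 0" using l by auto
    then have nv: "norm v > 0" by simp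
    have hz: "\<forall>k<n. (\<lambda>_. z0) k \<in> holdom V" using z0h by simp
    have z0': "Im (cnj z0) \<noteq> 0" using Imz0 Kb(1) by simp
    have eq: "Re (kform V n (\<lambda>_. z0) hs \<xi>) = (norm (R (cnj z0) (Bs v)))\<^sup>2 - (norm v)\<^sup>2"
      unfolding kform_Re[OF hz] w v_def by (simp add: R_Bs_sum[OF z0'])
    have le: "norm (R (cnj z0) (Bs v)) \<le> Kb * norm v / (Kb + 1)"
      using RBs_bound[OF z0', of v] Imz0 Kb(1) by (simp add: add.commute)
    have lt: "Kb * norm v / (Kb + 1) < norm v" using nv Kb(1) by (simp add: field_simps)
    have "norm (R (cnj z0) (Bs v)) < norm v" using le lt by linarith
    then have "(norm (R (cnj z0) (Bs v)))\<^sup>2 < (norm v)\<^sup>2" by (intro power_strict_mono) auto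
    then have "Re (kform V n (\<lambda>_. z0) hs \<xi>) < 0" using eq by linarith
    moreover have "(\<lambda>j. \<Sum>l<n. c l * u l j) = \<xi>" by (rule ext) (simp add: \<xi>_def)
    ultimately show "Re (kform V n (\<lambda>_. z0) hs (\<lambda>j. \<Sum>l<n. c l * u l j)) < 0"
      by simp
  qed
  then show ?thesis using z0h unfolding n_def
    by (intro exI[of _ "CARD('n)"] exI[of _ "\<lambda>_. z0"] exI[of _ hs]) auto
qed

end


lemma cnorm_nth_le: "cmod (x $ i) \<le> norm (x::complex^'n)"
proof -
  have "(cmod (x $ i))\<^sup>2 \<le> (\<Sum>j\<in>UNIV. (cmod (x $ j))\<^sup>2)"
    by (rule member_le_sum) simp_all
  then have "(cmod (x $ i))\<^sup>2 \<le> (norm x)\<^sup>2" by (simp only: norm_vec_sq)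
  then show ?thesis by (rule power2_le_imp_le) simp
qed

lemma matrix_vector_mult_minus_lhs: "(- (X::complex^'n^'m)) *v x = - (X *v x)"
  by (simp add: matrix_vector_mult_def vec_eq_iff sum_negf)

lemma cnorm_le_l1: "norm (x::complex^'n) \<le> (\<Sum>i\<in>UNIV. cmod (x $ i))"
  unfolding norm_vec_def by (rule L2_set_le_sum) auto

lemma cnorm_smult: "norm (c *s (x::complex^'n)) = cmod c * norm x"
proof -
  have "(norm (c *s x))\<^sup>2 = (cmod c * norm x)\<^sup>2"
    by (simp add: norm_vec_sq norm_mult power_mult_distrib sum_distrib_left)
  then show ?thesis by (simp add: power2_eq_iff_nonneg)
qed

lemma matvec_bound: "norm ((D::complex^'n^'n) *v x) \<le> (\<Sum>i\<in>UNIV. \<Sum>j\<in>UNIV. cmod (D $ i $ j)) * norm x"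
proof -
  have "norm (D *v x) \<le> (\<Sum>i\<in>UNIV. cmod ((D *v x) $ i))" by (rule cnorm_le_l1)
  also have "\<dots> \<le> (\<Sum>i\<in>UNIV. (\<Sum>j\<in>UNIV. cmod (D $ i $ j)) * norm x)"
  proof (rule sum_mono)
    fix i
    have "cmod ((D *v x) $ i) \<le> (\<Sum>j\<in>UNIV. cmod (D $ i $ j) * cmod (x $ j))"
      unfolding matrix_vector_mult_def by (simp, rule order_trans[OF norm_sum]) (simp add: norm_mult)
    also have "\<dots> \<le> (\<Sum>j\<in>UNIV. cmod (D $ i $ j) * norm x)"
      by (intro sum_mono mult_left_mono cnorm_nth_le) auto
    finally show "cmod ((D *v x) $ i) \<le> (\<Sum>j\<in>UNIV. cmod (D $ i $ j)) * norm x"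
      by (simp add: sum_distrib_right)
  qed
  also have "\<dots> = (\<Sum>i\<in>UNIV. \<Sum>j\<in>UNIV. cmod (D $ i $ j)) * norm x"
    by (simp add: sum_distrib_right)
  finally show ?thesis .
qed

context tf
begin

definition KB where "KB = (SOME K. K > 0 \<and> (\<forall>x. norm (B x) \<le> K * norm x))"

lemma KB: "KB > 0" "norm (B x) \<le> KB * norm x"
proof -
  obtain K0 where K0: "\<forall>x. norm (B x) \<le> K0 * norm x" using bop unfolding bounded_op_def by blast
  have "\<exists>K. K > 0 \<and> (\<forall>x. norm (B x) \<le> K * norm x)"
    by (rule exI[of _ "max K0 1"]) (use K0 in \<open>auto intro: order_trans[OF _ mult_right_mono]\<close>)
  then show "KB > 0" "norm (B x) \<le> KB * norm x"
    using someI_ex[of "\<lambda>K. K > 0 \<and> (\<forall>x. norm (B x) \<le> K * norm x)"] unfolding KB_def by auto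
qed

definition CD where "CD = (\<Sum>i\<in>UNIV. \<Sum>j\<in>UNIV. cmod (D $ i $ j))"

lemma CD: "CD \<ge> 0" "norm (D *v x) \<le> CD * norm x"
  unfolding CD_def by (auto intro!: sum_nonneg matvec_bound)

lemma asym:
  fixes y :: real and f :: "complex^'n"
  assumes y: "y \<ge> 2 * Kb + 1"
  defines "z \<equiv> \<i> * complex_of_real y"
  defines "x \<equiv> W z *v f"
  shows "z \<in> holdom V" "V z *v f = - x" "norm x \<le> 2 * norm f / y"
    "y * Im (ninner (V z *v f) f) = (y * norm (R z (Bs x)))\<^sup>2 - (y * norm x)\<^sup>2"
    "\<bar>y * norm x - norm f\<bar> \<le> (CD + KB * Kb) * norm x"
    "y * norm (R z (Bs x)) \<le> Kb * norm x"
proof -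
  have Imz: "Im z = y" by (simp add: z_def)
  have ypos: "y > 0" "y > Kb" using y Kb(1) by auto
  have z0: "Im z \<noteq> 0" using Imz ypos by simp
  show zh: "z \<in> holdom V" unfolding holdom_char using det_M_large[of z] Imz ypos by auto
  have dz: "det (M z) \<noteq> 0" using zh unfolding holdom_char by auto
  have Mx: "M z *v x = f" using W_inv[OF dz] by (simp add: x_def matrix_vector_mul_assoc)
  show Vf: "V z *v f = - x" by (simp add: V_eq x_def matrix_vector_mult_minus_lhs)
  have RB: "norm (R z (Bs x)) \<le> Kb * norm x / y" using RBs_bound[OF z0, of x] Imz ypos by simp
  then show "y * norm (R z (Bs x)) \<le> Kb * norm x" using ypos by (simp add: field_simps)
  have MI: "Im (ninner (M z *v x) x) = y * ((norm (R z (Bs x)))\<^sup>2 - (norm x)\<^sup>2)"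
    using M_Im[OF z0, of x] Imz by simp
  have "y * Im (ninner (V z *v f) f) = y * Im (ninner (- x) (M z *v x))" using Vf Mx by simp
  also have "ninner (- x) (M z *v x) = - cnj (ninner (M z *v x) x)"
    by (simp add: ninner_minus_left ninner_commute[of x])
  finally show "y * Im (ninner (V z *v f) f) = (y * norm (R z (Bs x)))\<^sup>2 - (y * norm x)\<^sup>2"
    using MI by (simp add: power_mult_distrib algebra_simps power2_eq_square)
  have "y * (norm x)\<^sup>2 - y * (norm (R z (Bs x)))\<^sup>2 = - Im (ninner f x)"
    using MI Mx by (simp add: algebra_simps)
  also have "\<dots> \<le> norm f * norm x"
    using abs_Im_le_cmod[of "ninner f x"] ninner_cauchy_schwarz[of f x] by linarith
  finally have A: "y * (norm x)\<^sup>2 - y * (norm (R z (Bs x)))\<^sup>2 \<le> norm f * norm x" .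
  have "y * (norm (R z (Bs x)))\<^sup>2 \<le> y * (Kb * norm x / y)\<^sup>2"
    using RB ypos by (intro mult_left_mono power_mono) auto
  also have "\<dots> = (Kb\<^sup>2 / y) * (norm x)\<^sup>2" using ypos by (simp add: power2_eq_square field_simps)
  also have "Kb\<^sup>2 / y \<le> y / 4"
  proof -
    have "Kb\<^sup>2 \<le> (y / 2)\<^sup>2" using y Kb(1) by (intro power_mono) auto
    then show ?thesis using ypos by (simp add: field_simps power2_eq_square)
  qed
  finally have "y * (norm (R z (Bs x)))\<^sup>2 \<le> y / 4 * (norm x)\<^sup>2"
    by (simp add: mult_right_mono)
  with A have "3 / 4 * y * (norm x)\<^sup>2 \<le> norm f * norm x" by (simp add: algebra_simps)
  then have "3 / 4 * y * norm x \<le> norm f"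
    by (cases "norm x = 0") (auto simp: power2_eq_square mult.assoc[symmetric] mult_le_cancel_right)
  then have "y * norm x \<le> 2 * norm f" using norm_ge_zero[of f] by linarith
  then show "norm x \<le> 2 * norm f / y" using ypos by (simp add: field_simps mult.commute)
  have "D *v x + B (R z (Bs x)) - z *s x = f"
    using Mx by (simp add: M_def matrix_vector_mult_add_rdistrib matrix_vector_mult_diff_rdistrib
        G_mult[OF z0] mat_mult_vec)
  then have zx: "z *s x = (D *v x + B (R z (Bs x))) - f" by (simp add: algebra_simps)
  have "y * norm x = norm (z *s x)" using ypos by (simp add: cnorm_smult z_def norm_mult)
  also have "\<dots> = norm ((D *v x + B (R z (Bs x))) - f)" by (simp add: zx)
  finally have yx: "y * norm x = norm ((D *v x + B (R z (Bs x))) - f)" .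
  have "norm (D *v x + B (R z (Bs x))) \<le> CD * norm x + KB * norm (R z (Bs x))"
    using CD(2)[of x] KB(2)[of "R z (Bs x)"] norm_triangle_ineq[of "D *v x" "B (R z (Bs x))"] by linarith
  also have "KB * norm (R z (Bs x)) \<le> KB * (Kb * norm x)"
  proof -
    have "norm (R z (Bs x)) \<le> Kb * norm x / y" by (rule RB)
    also have "\<dots> \<le> Kb * norm x / 1" using ypos y Kb(1) by (intro divide_left_mono) auto
    also have "\<dots> = Kb * norm x" by simp
    finally show ?thesis using KB(1) by (intro mult_left_mono) auto
  qed
  finally have "norm (D *v x + B (R z (Bs x))) \<le> (CD + KB * Kb) * norm x" by (simp add: algebra_simps)
  moreover have "\<bar>norm ((D *v x + B (R z (Bs x))) - f) - norm f\<bar> \<le> norm (D *v x + B (R z (Bs x)))"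
    using norm_triangle_ineq3[of "(D *v x + B (R z (Bs x))) - f" "- f"] by simp
  ultimately show "\<bar>y * norm x - norm f\<bar> \<le> (CD + KB * Kb) * norm x" using yx by simp
qed

end


lemma inv_y_tendsto: "((\<lambda>y::real. c / y) \<longlongrightarrow> 0) at_top"
  by (rule tendsto_divide_0[OF tendsto_const filterlim_at_top_imp_at_infinity[OF filterlim_ident]])

context tf
begin

lemma at_iinf_le: "at_iinf V \<le> at_top"
  unfolding at_iinf_def by (rule inf_le1)

lemma ev_large: "eventually (\<lambda>y::real. y \<ge> 2 * Kb + 1) at_top"
  by (rule eventually_ge_at_top)

lemma lim_iii: "((\<lambda>y. V (\<i> * complex_of_real y) *v f) \<longlongrightarrow> 0) at_top"
proof (rule Lim_null_comparison)
  show "eventually (\<lambda>y. norm (V (\<i> * complex_of_real y) *v f) \<le> 2 * norm f / y) at_top"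
    using ev_large by (rule eventually_mono) (use asym(2,3) in simp)
  show "((\<lambda>y. 2 * norm f / y) \<longlongrightarrow> 0) at_top" by (rule inv_y_tendsto)
qed

lemma lim_i: "((\<lambda>y. ninner (V (\<i> * complex_of_real y) *v f) f / complex_of_real y) \<longlongrightarrow> 0) at_top"
proof (rule Lim_null_comparison)
  show "eventually (\<lambda>y. norm (ninner (V (\<i> * complex_of_real y) *v f) f / complex_of_real y)
       \<le> 2 * (norm f)\<^sup>2 / y) at_top"
    using ev_large
  proof (rule eventually_mono)
    fix y :: real assume y: "y \<ge> 2 * Kb + 1"
    have ypos: "y \<ge> 1" using y Kb(1) by simp
    define x where "x = W (\<i> * complex_of_real y) *v f"
    have "cmod (ninner (V (\<i> * complex_of_real y) *v f) f) \<le> norm x * norm f"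
      using asym(2)[OF y, of f] ninner_cauchy_schwarz[of "- x" f] by (simp add: x_def)
    also have "\<dots> \<le> (2 * norm f / y) * norm f"
      using asym(3)[OF y, of f] by (intro mult_right_mono) (auto simp: x_def)
    also have "\<dots> \<le> (2 * norm f) * norm f"
    proof -
      have "2 * norm f / y \<le> 2 * norm f / 1" using ypos by (intro divide_left_mono) auto
      then show ?thesis by (intro mult_right_mono) auto
    qed
    finally have "cmod (ninner (V (\<i> * complex_of_real y) *v f) f) \<le> 2 * (norm f)\<^sup>2"
      by (simp add: power2_eq_square mult.assoc)
    then show "norm (ninner (V (\<i> * complex_of_real y) *v f) f / complex_of_real y) \<le> 2 * (norm f)\<^sup>2 / y"
      using ypos by (simp add: norm_divide divide_right_mono)
  qed
  show "((\<lambda>y. 2 * (norm f)\<^sup>2 / y) \<longlongrightarrow> 0) at_top" by (rule inv_y_tendsto)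
qed

lemma lim_B: "((\<lambda>y. y * Im (ninner (V (\<i> * complex_of_real y) *v f) f)) \<longlongrightarrow> - (norm f)\<^sup>2) at_top"
proof -
  define X where "X y = W (\<i> * complex_of_real y) *v f" for y
  define g where "g y = y * norm (X y)" for y
  define h where "h y = y * norm (R (\<i> * complex_of_real y) (Bs (X y)))" for y
  define C where "C = CD + KB * Kb"
  have C: "C \<ge> 0" using CD(1) KB(1) Kb(1) by (simp add: C_def)
  have g: "((\<lambda>y. g y - norm f) \<longlongrightarrow> 0) at_top"
  proof (rule Lim_null_comparison)
    show "eventually (\<lambda>y. norm (g y - norm f) \<le> C * (2 * norm f) / y) at_top"
      using ev_large
    proof (rule eventually_mono)
      fix y :: real assume y: "y \<ge> 2 * Kb + 1"
      have "norm (g y - norm f) \<le> C * norm (X y)"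
        using asym(5)[OF y, of f] by (simp add: g_def X_def C_def)
      also have "\<dots> \<le> C * (2 * norm f / y)"
        using asym(3)[OF y, of f] C by (intro mult_left_mono) (auto simp: X_def)
      finally show "norm (g y - norm f) \<le> C * (2 * norm f) / y" by simp
    qed
    show "((\<lambda>y. C * (2 * norm f) / y) \<longlongrightarrow> 0) at_top" by (rule inv_y_tendsto)
  qed
  then have g': "(g \<longlongrightarrow> norm f) at_top"
    using tendsto_add[OF g tendsto_const[of "norm f"]] by simp
  have h: "(h \<longlongrightarrow> 0) at_top"
  proof (rule Lim_null_comparison)
    show "eventually (\<lambda>y. norm (h y) \<le> Kb * (2 * norm f) / y) at_top"
      using ev_large
    proof (rule eventually_mono)
      fix y :: real assume y: "y \<ge> 2 * Kb + 1"
      have ypos: "y > 0" using y Kb(1) by simp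
      have "norm (h y) = h y" using ypos by (simp add: h_def)
      also have "\<dots> \<le> Kb * norm (X y)" using asym(6)[OF y, of f] by (simp add: h_def X_def)
      also have "\<dots> \<le> Kb * (2 * norm f / y)"
        using asym(3)[OF y, of f] Kb(1) by (intro mult_left_mono) (auto simp: X_def)
      finally show "norm (h y) \<le> Kb * (2 * norm f) / y" by simp
    qed
    show "((\<lambda>y. Kb * (2 * norm f) / y) \<longlongrightarrow> 0) at_top" by (rule inv_y_tendsto)
  qed
  have l: "((\<lambda>y. (h y)\<^sup>2 - (g y)\<^sup>2) \<longlongrightarrow> 0\<^sup>2 - (norm f)\<^sup>2) at_top"
    by (intro tendsto_intros h g')
  have ev: "eventually (\<lambda>y. (h y)\<^sup>2 - (g y)\<^sup>2 = y * Im (ninner (V (\<i> * complex_of_real y) *v f) f)) at_top"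
    using ev_large by (rule eventually_mono) (simp add: asym(4) g_def h_def X_def)
  show ?thesis using Lim_transform_eventually[OF l ev] by simp
qed

lemma kernel_cond:
  assumes z: "z \<in> holdom V" and hh: "\<forall>\<zeta>\<in>holdom V. NV V \<zeta> z *v h = 0"
  shows "h = 0"
proof -
  have z0: "Im z \<noteq> 0" "det (M z) \<noteq> 0" using z unfolding holdom_char by auto
  define T where "T = Kb\<^sup>2 / \<bar>Im z\<bar> + Kb + 1"
  define \<zeta> where "\<zeta> = \<i> * complex_of_real T"
  have q: "Kb\<^sup>2 / \<bar>Im z\<bar> \<ge> 0" by simp
  have T: "T > Kb" "T > Kb\<^sup>2 / \<bar>Im z\<bar>" "T > 0" unfolding T_def using Kb(1) q by linarith+
  have Im\<zeta>: "Im \<zeta> = T" by (simp add: \<zeta>_def)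
  have \<zeta>h: "\<zeta> \<in> holdom V" unfolding holdom_char using det_M_large[of \<zeta>] Im\<zeta> T by auto
  have \<zeta>0: "Im \<zeta> \<noteq> 0" "det (M \<zeta>) \<noteq> 0" using \<zeta>h unfolding holdom_char by auto
  define g where "g = cadj (W \<zeta>) *v h"
  have "(W z ** E \<zeta> z ** cadj (W \<zeta>)) *v h = 0" using hh \<zeta>h NV_formula[OF \<zeta>h z] by auto
  then have "W z *v (E \<zeta> z *v g) = 0" by (simp add: g_def matrix_vector_mul_assoc[symmetric])
  then have "M z *v (W z *v (E \<zeta> z *v g)) = 0" by simp
  moreover have MW: "M z *v (W z *v v) = v" for v
  proof -
    have "M z *v (W z *v v) = (M z ** W z) *v v" by (rule matrix_vector_mul_assoc)
    also have "M z ** W z = mat 1" using W_inv[OF z0(2)] by simp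
    finally show ?thesis by simp
  qed
  ultimately have Eg: "E \<zeta> z *v g = 0" by simp
  have \<zeta>': "Im (cnj \<zeta>) \<noteq> 0" and z': "Im (cnj z) \<noteq> 0" using \<zeta>0 z0 by auto
  have "ninner g g = cinner (R (cnj \<zeta>) (Bs g)) (R (cnj z) (Bs g))"
    using E_inner[OF \<zeta>0(1) z0(1), of g g] Eg by simp
  then have "(norm g)\<^sup>2 \<le> norm (R (cnj \<zeta>) (Bs g)) * norm (R (cnj z) (Bs g))"
    using cinner_cauchy_schwarz[of "R (cnj \<zeta>) (Bs g)" "R (cnj z) (Bs g)"]
      complex_Re_le_cmod[of "ninner g g"] ninner_self_Re[of g] by simp
  also have "\<dots> \<le> (Kb * norm g / T) * (Kb * norm g / \<bar>Im z\<bar>)"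
    using RBs_bound[OF \<zeta>', of g] RBs_bound[OF z', of g] Im\<zeta> T Kb(1)
    by (intro mult_mono) auto
  also have "\<dots> = (Kb\<^sup>2 / (T * \<bar>Im z\<bar>)) * (norm g)\<^sup>2"
    by (simp add: power2_eq_square field_simps)
  finally have A: "(norm g)\<^sup>2 \<le> (Kb\<^sup>2 / (T * \<bar>Im z\<bar>)) * (norm g)\<^sup>2" .
  define c where "c = Kb\<^sup>2 / (T * \<bar>Im z\<bar>)"
  have c1: "c < 1"
    using T(2,3) z0(1) by (simp add: c_def field_simps)
  have "(1 - c) * (norm g)\<^sup>2 \<le> 0" using A by (simp add: c_def algebra_simps)
  then have "(norm g)\<^sup>2 \<le> 0" using c1 by (simp add: mult_le_0_iff)
  then have "norm g = 0" by (rule power2_less_eq_zero_iff[THEN iffD1])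
  then have g0: "g = 0" by simp
  have "cadj (W \<zeta> ** M \<zeta>) = cadj (mat 1)" using W_inv[OF \<zeta>0(2)] by simp
  then have CM: "cadj (M \<zeta>) ** cadj (W \<zeta>) = mat 1" by (simp add: cadj_mult cadj_mat)
  have "cadj (M \<zeta>) *v g = (cadj (M \<zeta>) ** cadj (W \<zeta>)) *v h"
    unfolding g_def by (rule matrix_vector_mul_assoc)
  then have "h = cadj (M \<zeta>) *v g" by (simp add: CM)
  then show ?thesis using g0 by simp
qed

theorem main: "class_N1R CARD('n) V"
proof -
  have cN: "class_N CARD('n) V"
    unfolding class_N_def
  proof (intro conjI allI ballI impI)
    show "entry V i j meromorphic_on (- \<real>)" for i j by (rule V_meromorphic)
    show "cnj z \<in> holdom V" if "z \<in> holdom V" for z using holdom_cnj[OF that] by simp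
    show "V (cnj z) = cadj (V z)" if "z \<in> holdom V" for z using holdom_cnj[OF that] by simp
    show "\<not> neg_squares_ge (kform V m zs hs) (Suc CARD('n))" if "\<forall>k<m. zs k \<in> holdom V" for m zs hs
      by (rule no_more[OF that])
    show "\<exists>m zs hs. (\<forall>k<m. zs k \<in> holdom V) \<and> neg_squares_ge (kform V m zs hs) CARD('n)"
      by (rule exists_neg)
  qed
  have i: "\<forall>f. ((\<lambda>y. ninner (V (\<i> * complex_of_real y) *v f) f / complex_of_real y) \<longlongrightarrow> 0) (at_iinf V)"
    by (intro allI tendsto_mono[OF at_iinf_le lim_i])
  have ii: "\<forall>z\<in>holdom V. {h. \<forall>\<zeta>\<in>holdom V. NV V \<zeta> z *v h = 0} = {0}"
  proof (intro ballI equalityI subsetI)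
    fix z h assume z: "z \<in> holdom V" and h: "h \<in> {h. \<forall>\<zeta>\<in>holdom V. NV V \<zeta> z *v h = 0}"
    then show "h \<in> {0}" using kernel_cond[OF z] by simp
  next
    fix z h assume "h \<in> ({0} :: (complex^'n) set)"
    then show "h \<in> {h. \<forall>\<zeta>\<in>holdom V. NV V \<zeta> z *v h = 0}" by simp
  qed
  have iii: "\<forall>f\<in>Bset V. ((\<lambda>y. V (\<i> * complex_of_real y) *v f) \<longlongrightarrow> 0) (at_iinf V)"
    by (intro ballI tendsto_mono[OF at_iinf_le lim_iii])
  have B: "Bset V = UNIV"
  proof (rule set_eqI)
    fix f :: "complex^'n"
    have "((\<lambda>y. y * Im (ninner (V (\<i> * complex_of_real y) *v f) f)) \<longlongrightarrow> - (norm f)\<^sup>2) (at_iinf V)"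
      by (rule tendsto_mono[OF at_iinf_le lim_B])
    then show "f \<in> Bset V \<longleftrightarrow> f \<in> UNIV" unfolding Bset_def by blast
  qed
  show ?thesis unfolding class_N1R_def class_NR_def by (intro conjI cN i ii iii B)
qed

end


theorem theorem23:
  fixes DA :: "'h::chilbert set" and A0 :: "'h \<Rightarrow> 'h"
    and B :: "'h \<Rightarrow> complex^'n" and Bs :: "complex^'n \<Rightarrow> 'h"
    and D :: "complex^'n^'n"
  assumes "selfadjoint DA A0"
    and "bounded_op B"
    and "is_adjoint B Bs"
    and "cadj D = D"
  shows "class_N1R CARD('n) (transfer_fun DA A0 B Bs D)"
  proof -
  have "tf DA A0 B Bs D"
    unfolding tf_def tf_axioms_def sa_def using assms by blast
  then interpret tf DA A0 B Bs D .
  show ?thesis by (rule main)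
qed

end
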